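(* Let $a\ge3$, let $H=G_0\times\cdots\times G_{i-1}\times H_i\times G_{i+1}\times\cdots\times G_k\in\mathfrak{H}$ (notation in context), and let $n$ be a positive integer with $\gcd(n,a)=1$. Let $\mathcal{P}$ be the sequence of prime factors of $n$ counted with multiplicity, let $\mathcal{T}$ be the subsequence of primes $r$ in $\mathcal{P}$ with $r\bmod a\notin H$, and let $t$ be the length of $\mathcal{T}$. Suppose the set of residues modulo $a$ of the elements of $\mathcal{P}$ contains $H$. (i) If $t\ge2^{m-1}$, then $n\notin\mathcal{E}^*_a$. (ii) Suppose $t=2^{m-1}-1$ and $m\ge2$ (in this case necessarily $\gamma_0\le1$, so $G_0$ is trivial and $1\le i\le k$). Fix a primitive root $g$ modulo $p_i^{\gamma_i}$. Then $n\in\mathcal{E}^*_a$ if and only if there exists an odd integer $e$ such that every prime $r$ in $\mathcal{T}$ satisfies $r\equiv g^{e'}\pmod{p_i^{\gamma_i}}$ for some integer $e'$ with $e'\equiv e$ or $e'\equiv -e\pmod{2^m}$.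
   Context: Let $a\ge3$ have canonical factorization $a=2^{\gamma_0}p_1^{\gamma_1}\cdots p_k^{\gamma_k}$ ($p_i$ distinct odd primes). Let $G=(\mathbb{Z}/a\mathbb{Z})^*$, identified by the Chinese remainder theorem with $G_0\times G_1\times\cdots\times G_k$, where $G_0=(\mathbb{Z}/2^{\gamma_0}\mathbb{Z})^*$ and $G_i=(\mathbb{Z}/p_i^{\gamma_i}\mathbb{Z})^*$. For $1\le i\le k$ let $H_i$ be the unique maximal subgroup of the cyclic group $G_i$ not containing $-1$ (its subgroup of odd order); its index is $2^{m_i}$ where $2^{m_i}\|p_i-1$. Let $H_0=G_0$ (trivial) if $\gamma_0\le1$; if $\gamma_0\ge2$, $H_0$ denotes any subgroup of $G_0$ of index $2$ not containing $-1\bmod 2^{\gamma_0}$. Let $\delta=0$ if $\gamma_0\le1$ and $\delta=2$ if $\gamma_0\ge2$, and define $m\ge1$ by $2^m\|\gcd(\delta,p_1-1,\dots,p_k-1)$. Let $\mathfrak{H}$ be the set of subgroups of $G$ of the form $G_0\times\cdots\times G_{i-1}\times H_i\times G_{i+1}\times\cdots\times G_k$ ($0\le i\le k$, any allowed choice of $H_0$ when $i=0$) with index $[G:H]=2^m$. For a positive integer $n$, $R(n;a)$ is the number of pairs $(x,y)$ of positive integers with $\frac an=\frac1x+\frac1y$, and $\mathcal{E}^*_a=\{n\in\mathbb{N}:R(n;a)=0,\ \gcd(n,a)=1\}$. *)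

theory Defs
  imports "HOL-Number_Theory.Number_Theory"
begin

definition units_mod :: "nat \<Rightarrow> nat set" where
  "units_mod a = {x. x < a \<and> coprime x a}"

definition gamma0 :: "nat \<Rightarrow> nat" where
  "gamma0 a = multiplicity 2 a"

definition delta_of :: "nat \<Rightarrow> nat" where
  "delta_of a = (if gamma0 a \<le> 1 then 0 else 2)"

definition m_of :: "nat \<Rightarrow> nat" where
  "m_of a = multiplicity 2
     (Gcd ({delta_of a} \<union> {p - 1 | p. prime p \<and> odd p \<and> p dvd a}))"

definition ppart :: "nat \<Rightarrow> nat \<Rightarrow> nat" where
  "ppart a p = p ^ multiplicity p a"

text \<open>For an odd prime p = p_i dividing a: the subgroup
  G_0 x ... x H_i x ... x G_k, where H_i is the subgroup of odd order of
  G_i = (Z/p_i^gamma_i Z)^*, i.e. its elements of odd order.\<close>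

definition H_odd :: "nat \<Rightarrow> nat \<Rightarrow> nat set" where
  "H_odd a p = {x \<in> units_mod a. odd (ord (ppart a p) x)}"

definition admissible_H0 :: "nat \<Rightarrow> nat set \<Rightarrow> bool" where
  "admissible_H0 a S \<longleftrightarrow>
     (let q = 2 ^ gamma0 a in
       S \<subseteq> units_mod q \<and> 1 \<in> S \<and>
       (\<forall>x\<in>S. \<forall>y\<in>S. (x * y) mod q \<in> S) \<and>
       2 * card S = totient q \<and> q - 1 \<notin> S)"

definition frakH :: "nat \<Rightarrow> nat set set" where
  "frakH a =
     {H. totient a = 2 ^ m_of a * card H \<and>
         ((\<exists>p. prime p \<and> odd p \<and> p dvd a \<and> H = H_odd a p) \<or>
          (gamma0 a \<ge> 2 \<and> (\<exists>S. admissible_H0 a S \<and>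
              H = {x \<in> units_mod a. x mod 2 ^ gamma0 a \<in> S})))}"

definition R :: "nat \<Rightarrow> nat \<Rightarrow> nat" where
  "R n a = card {(x, y). x > 0 \<and> y > 0 \<and>
      (of_nat a / of_nat n :: rat) = 1 / of_nat x + 1 / of_nat y}"

definition Estar :: "nat \<Rightarrow> nat set" where
  "Estar a = {n. n > 0 \<and> R n a = 0 \<and> gcd n a = 1}"

definition cong_gpow :: "nat \<Rightarrow> nat \<Rightarrow> int \<Rightarrow> nat \<Rightarrow> bool" where
  "cong_gpow q g e r \<longleftrightarrow>
     (if e \<ge> 0 then [r = g ^ nat e] (mod q) else [r * g ^ nat (- e) = 1] (mod q))"

end

theory Submission
  imports Defs
begin


definition achf :: "('a \<Rightarrow> int) \<Rightarrow> 'a multiset \<Rightarrow> int \<Rightarrow> bool" where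
  "achf f M s \<longleftrightarrow> (\<exists>A B. A + B \<subseteq># M \<and> s = sum_mset (image_mset f A) - sum_mset (image_mset f B))"

definition pval :: "nat \<times> int \<Rightarrow> int" where "pval x = 2 ^ fst x * snd x"

definition wt :: "(nat \<times> int) multiset \<Rightarrow> nat" where
  "wt P = sum_mset (image_mset (\<lambda>x. 2 ^ fst x) P)"

lemma merge:
  assumes "achf f (add_mset z N) s" and "f z = f x + c * f y" and "c = 1 \<or> c = -1"
  shows "achf f (add_mset x (add_mset y N)) s"
proof -
  obtain A B where AB: "A + B \<subseteq># add_mset z N" and s: "s = sum_mset (image_mset f A) - sum_mset (image_mset f B)"
    using assms(1) unfolding achf_def by blast
  show ?thesis
  proof (cases "z \<in># A")
    case True
    then obtain A' where A: "A = add_mset z A'" by (metis insert_DiffM)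
    have sub: "A' + B \<subseteq># N" using AB A by simp
    show ?thesis
    proof (cases "c = 1")
      case True
      have "add_mset x (add_mset y A') + B \<subseteq># add_mset x (add_mset y N)" using sub by simp
      moreover have "s = sum_mset (image_mset f (add_mset x (add_mset y A'))) - sum_mset (image_mset f B)"
        using s A assms(2) True by simp
      ultimately show ?thesis unfolding achf_def by blast
    next
      case False
      hence c: "c = -1" using assms(3) by simp
      have "add_mset x A' + add_mset y B \<subseteq># add_mset x (add_mset y N)" using sub
        by (simp add: add_mset_commute)
      moreover have "s = sum_mset (image_mset f (add_mset x A')) - sum_mset (image_mset f (add_mset y B))"
        using s A assms(2) c by simp
      ultimately show ?thesis unfolding achf_def by blast
    qed
  next
    case notA: False
    show ?thesis
    proof (cases "z \<in># B")
      case True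
      then obtain B' where B: "B = add_mset z B'" by (metis insert_DiffM)
      have sub: "A + B' \<subseteq># N" using AB B by simp
      show ?thesis
      proof (cases "c = 1")
        case True
        have "A + add_mset x (add_mset y B') \<subseteq># add_mset x (add_mset y N)" using sub by simp
        moreover have "s = sum_mset (image_mset f A) - sum_mset (image_mset f (add_mset x (add_mset y B')))"
          using s B assms(2) True by simp
        ultimately show ?thesis unfolding achf_def by blast
      next
        case False
        hence c: "c = -1" using assms(3) by simp
        have "add_mset y A + add_mset x B' \<subseteq># add_mset x (add_mset y N)" using sub
          by (simp add: add_mset_commute)
        moreover have "s = sum_mset (image_mset f (add_mset y A)) - sum_mset (image_mset f (add_mset x B'))"
          using s B assms(2) c by simp
        ultimately show ?thesis unfolding achf_def by blast
      qed
    next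
      case False
      hence "z \<notin># A + B" using notA by simp
      have "A + B \<subseteq># N" unfolding subseteq_mset_def
      proof
        fix a
        show "count (A + B) a \<le> count N a"
          using AB[unfolded subseteq_mset_def, rule_format, of a] \<open>z \<notin># A + B\<close>
          by (cases "a = z") (auto simp: not_in_iff)
      qed
      hence "A + B \<subseteq># add_mset x (add_mset y N)"
        unfolding subseteq_mset_def by (auto intro: le_SucI)
      thus ?thesis using s unfolding achf_def by blast
    qed
  qed
qed

lemma wt_add[simp]: "wt (A + B) = wt A + wt B" by (simp add: wt_def)
lemma wt_add_mset[simp]: "wt (add_mset x A) = 2 ^ fst x + wt A" by (simp add: wt_def)
lemma wt_empty[simp]: "wt {#} = 0" by (simp add: wt_def)

lemma wt_const:
  assumes "\<forall>x\<in>#F. fst x = k"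
  shows "wt F = size F * 2 ^ k"
proof -
  have "image_mset (\<lambda>x. (2::nat) ^ fst x) F = image_mset (\<lambda>x. 2 ^ k) F"
    using assms by (intro image_mset_cong) auto
  thus ?thesis by (simp add: wt_def)
qed

lemma wt_bound:
  "(\<forall>x\<in>#P. fst x < k) \<Longrightarrow> (\<forall>j. size (filter_mset (\<lambda>x. fst x = j) P) \<le> 1) \<Longrightarrow> wt P < 2 ^ k"
proof (induction k arbitrary: P)
  case 0
  hence "P = {#}" by (metis less_nat_zero_code multiset_nonemptyE)
  thus ?case by simp
next
  case (Suc k)
  define F where "F = filter_mset (\<lambda>x. fst x = k) P"
  define Q where "Q = filter_mset (\<lambda>x. \<not> fst x = k) P"
  have P: "P = F + Q" unfolding F_def Q_def by (rule multiset_partition)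
  have "wt F = size F * 2 ^ k" by (rule wt_const) (simp add: F_def)
  moreover have "size F \<le> 1" using Suc.prems(2) F_def by blast
  ultimately have wF: "wt F \<le> 2 ^ k" by simp
  have "\<forall>x\<in>#Q. fst x < k" using Suc.prems(1) unfolding Q_def by auto
  moreover have "\<forall>j. size (filter_mset (\<lambda>x. fst x = j) Q) \<le> 1"
  proof
    fix j
    have "filter_mset (\<lambda>x. fst x = j) Q \<subseteq># filter_mset (\<lambda>x. fst x = j) P"
      unfolding Q_def by (intro multiset_filter_mono) simp
    hence "size (filter_mset (\<lambda>x. fst x = j) Q) \<le> size (filter_mset (\<lambda>x. fst x = j) P)"
      by (rule size_mset_mono)
    thus "size (filter_mset (\<lambda>x. fst x = j) Q) \<le> 1" using Suc.prems(2) by (meson order_trans)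
  qed
  ultimately have "wt Q < 2 ^ k" using Suc.IH by blast
  thus ?case using wF P by simp
qed

lemma comb:
  assumes m: "m \<ge> 1" and "\<forall>x\<in>#P. odd (snd x) \<and> fst x < m" and "2 ^ (m - 1) \<le> wt P"
  shows "\<exists>s. achf pval P s \<and> [s = 2 ^ (m - 1)] (mod 2 ^ m)"
  using assms(2,3)
proof (induction "size P" arbitrary: P rule: less_induct)
  case less
  show ?case
  proof (cases "\<exists>x\<in>#P. fst x = m - 1")
    case True
    then obtain x where x: "x \<in># P" "fst x = m - 1" by blast
    have "{#x#} + {#} \<subseteq># P" using x by simp
    hence "achf pval P (pval x)" unfolding achf_def by (intro exI[of _ "{#x#}"] exI[of _ "{#}"]) simp
    moreover have "[pval x = 2 ^ (m - 1)] (mod 2 ^ m)"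
    proof -
      have "odd (snd x)" using x less.prems by blast
      then obtain c where c: "snd x = 2 * c + 1" by (metis oddE)
      have "pval x - 2 ^ (m - 1) = 2 ^ m * c"
        using m x c unfolding pval_def by (cases m) (auto simp: algebra_simps)
      thus ?thesis unfolding cong_iff_dvd_diff by simp
    qed
    ultimately show ?thesis by blast
  next
    case notop: False
    show ?thesis
    proof (cases "\<exists>j. 2 \<le> size (filter_mset (\<lambda>x. fst x = j) P)")
      case True
      then obtain j where j: "2 \<le> size (filter_mset (\<lambda>x. fst x = j) P)" by blast
      define F where "F = filter_mset (\<lambda>x. fst x = j) P"
      have "F \<noteq> {#}" using j unfolding F_def[symmetric] by (metis not_numeral_le_zero size_empty)
      then obtain x where x: "x \<in># F" by blast
      have "size (F - {#x#}) \<ge> 1" using j x F_def by (simp add: size_Diff_submset)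
      then obtain y where y: "y \<in># F - {#x#}" by (metis One_nat_def multiset_nonemptyE not_one_le_zero size_empty)
      have "add_mset x {#y#} \<subseteq># F" using x y by (simp add: insert_subset_eq_iff)
      hence sub: "add_mset x {#y#} \<subseteq># P" using F_def by (meson multiset_filter_subset subset_mset.order_trans)
      define N where "N = P - add_mset x {#y#}"
      have "P = add_mset x {#y#} + N" unfolding N_def by (rule subset_mset.add_diff_inverse[OF sub, symmetric])
      hence P: "P = add_mset x (add_mset y N)" by simp
      have xy: "fst x = j" "fst y = j" using x y F_def by (auto dest: in_diffD)
      have inP: "x \<in># P" "y \<in># P" using P by auto
      have ox: "odd (snd x)" "fst x < m" and oy: "odd (snd y)" using inP less.prems by auto
      have "fst x \<noteq> m - 1" using notop inP by blast
      hence jm: "j + 1 < m" using ox xy by linarith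
      define u where "u = snd x"
      define v where "v = snd y"
      have ev: "even (u + v)" "even (u - v)" using ox oy u_def v_def by auto
      have "2 * ((u + v) div 2) = u + v" "2 * ((u - v) div 2) = u - v" using ev by auto
      hence usum: "(u + v) div 2 + (u - v) div 2 = u" by linarith
      define z where "z = (if odd ((u + v) div 2) then (j + 1, (u + v) div 2) else (j + 1, (u - v) div 2))"
      define c :: int where "c = (if odd ((u + v) div 2) then 1 else -1)"
      have "odd u" using ox u_def by simp
      hence "odd ((u + v) div 2) \<or> odd ((u - v) div 2)" using usum by (metis even_add)
      hence oz: "odd (snd z)" unfolding z_def by auto
      have pz: "pval z = pval x + c * pval y"
      proof -
        have e1: "2 * ((u + v) div 2) = u + v" and e2: "2 * ((u - v) div 2) = u - v" using ev by auto
        show ?thesis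
        proof (cases "odd ((u + v) div 2)")
          case True
          have "pval z = 2 ^ (j + 1) * ((u + v) div 2)" unfolding pval_def z_def using True by simp
          also have "\<dots> = 2 ^ j * (2 * ((u + v) div 2))" by simp
          also have "\<dots> = 2 ^ j * (u + v)" using e1 by simp
          also have "\<dots> = pval x + c * pval y" using True xy unfolding c_def by (simp add: pval_def u_def v_def algebra_simps)
          finally show ?thesis .
        next
          case False
          have "pval z = 2 ^ (j + 1) * ((u - v) div 2)" unfolding pval_def z_def using False by simp
          also have "\<dots> = 2 ^ j * (2 * ((u - v) div 2))" by simp
          also have "\<dots> = 2 ^ j * (u - v)" using e2 by simp
          also have "\<dots> = pval x + c * pval y" using False xy unfolding c_def by (simp add: pval_def u_def v_def algebra_simps)
          finally show ?thesis .
        qed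
      qed
      define P' where "P' = add_mset z N"
      have "size P' < size P" using P P'_def by simp
      moreover have "\<forall>x\<in>#P'. odd (snd x) \<and> fst x < m"
        using less.prems(1) P P'_def oz jm z_def by auto
      moreover have "2 ^ (m - 1) \<le> wt P'"
      proof -
        have "wt P' = wt P" using P P'_def xy z_def by simp
        thus ?thesis using less.prems(2) by simp
      qed
      ultimately obtain s where s: "achf pval P' s" "[s = 2 ^ (m - 1)] (mod 2 ^ m)"
        using less.hyps by blast
      have "achf pval P s" using merge[OF s(1)[unfolded P'_def] pz] P c_def by auto
      thus ?thesis using s(2) by blast
    next
      case False
      have "\<forall>x\<in>#P. fst x < m - 1" using less.prems notop by fastforce
      moreover have "\<forall>j. size (filter_mset (\<lambda>x. fst x = j) P) \<le> 1" using False by (metis One_nat_def Suc_1 not_less_eq_eq)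
      ultimately have "wt P < 2 ^ (m - 1)" by (rule wt_bound)
      thus ?thesis using less.prems by simp
    qed
  qed
qed

lemma achf_image:
  assumes "achf f (image_mset g M) s"
  shows "achf (f \<circ> g) M s"
proof -
  obtain A B where AB: "A + B \<subseteq># image_mset g M" and s: "s = sum_mset (image_mset f A) - sum_mset (image_mset f B)"
    using assms unfolding achf_def by blast
  have "image_mset g M = (A + B) + (image_mset g M - (A + B))"
    using AB by (simp add: subset_mset.add_diff_inverse)
  then obtain D E where DE: "M = D + E" "A + B = image_mset g D" by (metis image_mset_eq_plusD)
  then obtain A0 B0 where AB0: "D = A0 + B0" "A = image_mset g A0" "B = image_mset g B0"
    by (metis image_mset_eq_plusD)
  have "A0 + B0 \<subseteq># M" using DE AB0 by simp
  moreover have "s = sum_mset (image_mset (f \<circ> g) A0) - sum_mset (image_mset (f \<circ> g) B0)"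
    using s AB0 by (simp add: image_mset.compositionality)
  ultimately show ?thesis unfolding achf_def by blast
qed

lemma achf_cong:
  assumes "achf f M s" and "\<forall>x\<in>#M. f x = f' x"
  shows "achf f' M s"
proof -
  obtain A B where AB: "A + B \<subseteq># M" and s: "s = sum_mset (image_mset f A) - sum_mset (image_mset f B)"
    using assms unfolding achf_def by blast
  have "\<forall>x\<in>#A. f x = f' x" "\<forall>x\<in>#B. f x = f' x" using mset_subset_eqD[OF AB] assms(2) by auto
  hence "image_mset f A = image_mset f' A" "image_mset f B = image_mset f' B"
    by (auto intro: image_mset_cong)
  thus ?thesis using AB s unfolding achf_def by metis
qed

lemma achf_diff:
  assumes "A0 \<subseteq># T" "B0 \<subseteq># T"
  shows "achf f T (sum_mset (image_mset f A0) - sum_mset (image_mset f B0))"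
proof -
  define I where "I = A0 - (A0 - B0)"
  have I2: "B0 - (B0 - A0) = I" unfolding I_def by (rule multiset_eqI) simp
  have a: "A0 = (A0 - B0) + I" unfolding I_def by (rule multiset_eqI) simp
  have b: "B0 = (B0 - A0) + I" unfolding I2[symmetric] by (rule multiset_eqI) simp
  have "(A0 - B0) + (B0 - A0) \<subseteq># T"
    unfolding subseteq_mset_def
  proof
    fix x
    show "count (A0 - B0 + (B0 - A0)) x \<le> count T x"
    proof -
      have "count A0 x \<le> count T x" "count B0 x \<le> count T x" using assms by (auto simp: subseteq_mset_def)
      thus ?thesis by simp
    qed
  qed
  moreover have "sum_mset (image_mset f A0) - sum_mset (image_mset f B0) =
     sum_mset (image_mset f (A0 - B0)) - sum_mset (image_mset f (B0 - A0))"
    by (subst a, subst (2) b) simp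
  ultimately show ?thesis unfolding achf_def by blast
qed

lemma pm_sum:
  fixes f :: "'a \<Rightarrow> int"
  assumes "\<forall>y\<in>#Y. [f y = e] (mod M) \<or> [f y = - e] (mod M)"
  shows "\<exists>c. \<bar>c\<bar> \<le> int (size Y) \<and> [sum_mset (image_mset f Y) = e * c] (mod M)"
  using assms
proof (induction Y)
  case empty
  show ?case by (intro exI[of _ 0]) simp
next
  case (add y Y)
  then obtain c where c: "\<bar>c\<bar> \<le> int (size Y)" "[sum_mset (image_mset f Y) = e * c] (mod M)" by auto
  have "[f y = e] (mod M) \<or> [f y = - e] (mod M)" using add.prems by simp
  thus ?case
  proof
    assume h: "[f y = e] (mod M)"
    have "[f y + sum_mset (image_mset f Y) = e + e * c] (mod M)" using h c(2) by (rule cong_add)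
    hence "[sum_mset (image_mset f (add_mset y Y)) = e * (c + 1)] (mod M)" by (simp add: algebra_simps)
    moreover have "\<bar>c + 1\<bar> \<le> int (size (add_mset y Y))" using c(1) by simp
    ultimately show ?case by blast
  next
    assume h: "[f y = - e] (mod M)"
    have "[f y + sum_mset (image_mset f Y) = - e + e * c] (mod M)" using h c(2) by (rule cong_add)
    hence "[sum_mset (image_mset f (add_mset y Y)) = e * (c - 1)] (mod M)" by (simp add: algebra_simps)
    moreover have "\<bar>c - 1\<bar> \<le> int (size (add_mset y Y))" using c(1) by simp
    ultimately show ?case by blast
  qed
qed

lemma nonach:
  fixes f :: "'a \<Rightarrow> int"
  assumes m: "m \<ge> 1" and e: "odd e"
    and pm: "\<forall>y\<in>#Y. [f y = e] (mod 2 ^ m) \<or> [f y = - e] (mod 2 ^ m)"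
    and sz: "size Y < 2 ^ (m - 1)"
    and ach: "achf f Y s"
  shows "\<not> [s = 2 ^ (m - 1)] (mod 2 ^ m)"
proof
  assume hs: "[s = 2 ^ (m - 1)] (mod 2 ^ m)"
  obtain A B where AB: "A + B \<subseteq># Y" and s: "s = sum_mset (image_mset f A) - sum_mset (image_mset f B)"
    using ach unfolding achf_def by blast
  have "\<forall>y\<in>#A. [f y = e] (mod 2 ^ m) \<or> [f y = - e] (mod 2 ^ m)"
       "\<forall>y\<in>#B. [f y = e] (mod 2 ^ m) \<or> [f y = - e] (mod 2 ^ m)"
    using pm mset_subset_eqD[OF AB] by auto
  then obtain c1 c2 where c1: "\<bar>c1\<bar> \<le> int (size A)" "[sum_mset (image_mset f A) = e * c1] (mod 2 ^ m)"
     and c2: "\<bar>c2\<bar> \<le> int (size B)" "[sum_mset (image_mset f B) = e * c2] (mod 2 ^ m)"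
    using pm_sum by metis
  have "size (A + B) \<le> size Y" using AB by (rule size_mset_mono)
  have iY: "int (size Y) < 2 ^ (m - 1)" using sz by (metis of_nat_less_iff of_nat_numeral of_nat_power)
  have s2: "int (size A) + int (size B) \<le> int (size Y)" using \<open>size (A + B) \<le> size Y\<close> by simp
  have cb: "\<bar>c1 - c2\<bar> < 2 ^ (m - 1)" using iY c1(1) c2(1) s2 abs_triangle_ineq4[of c1 c2] by linarith
  have "[s = e * c1 - e * c2] (mod 2 ^ m)" using cong_diff[OF c1(2) c2(2)] s by simp
  hence "[s = e * (c1 - c2)] (mod 2 ^ m)" by (simp add: right_diff_distrib)
  hence "[e * (c1 - c2) = 2 ^ (m - 1)] (mod 2 ^ m)" using hs by (metis cong_sym cong_trans)
  then obtain k where k: "e * (c1 - c2) - 2 ^ (m - 1) = 2 ^ m * k" unfolding cong_iff_dvd_diff by (auto elim: dvdE)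
  have pm1: "(2::int) ^ m = 2 * 2 ^ (m - 1)" using m by (cases m) auto
  have "e * (c1 - c2) = 2 ^ (m - 1) * (2 * k + 1)" using k pm1 by (simp add: algebra_simps)
  hence d: "2 ^ (m - 1) dvd e * (c1 - c2)" by simp
  have "coprime ((2::int) ^ (m - 1)) e" using e by simp
  hence "2 ^ (m - 1) dvd (c1 - c2)" using d by (simp add: coprime_dvd_mult_right_iff)
  have "c1 - c2 = 0"
  proof (rule ccontr)
    assume "c1 - c2 \<noteq> 0"
    hence "\<bar>2 ^ (m - 1)\<bar> \<le> \<bar>c1 - c2\<bar>" using \<open>2 ^ (m - 1) dvd (c1 - c2)\<close> by (rule dvd_imp_le_int)
    thus False using cb by simp
  qed
  hence "(0::int) = 2 ^ (m - 1) * (2 * k + 1)" using \<open>e * (c1 - c2) = _\<close> by simp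
  moreover have "(2::int) * k + 1 \<noteq> 0" by presburger
  ultimately show False by simp
qed




lemma eqn_iff:
  fixes a n x y :: nat
  assumes "x > 0" "y > 0" "n > 0"
  shows "((of_nat a / of_nat n :: rat) = 1 / of_nat x + 1 / of_nat y) \<longleftrightarrow> a * x * y = n * (x + y)"
proof -
  have "((of_nat a / of_nat n :: rat) = 1 / of_nat x + 1 / of_nat y) \<longleftrightarrow>
        (of_nat a * of_nat x * of_nat y :: rat) = of_nat n * (of_nat x + of_nat y)"
    using assms by (simp add: field_simps)
  also have "\<dots> \<longleftrightarrow> (of_nat (a * x * y) :: rat) = of_nat (n * (x + y))" by simp
  also have "\<dots> \<longleftrightarrow> a * x * y = n * (x + y)" by (rule of_nat_eq_iff)
  finally show ?thesis .
qed

lemma xbound: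
  fixes a n x y :: nat
  assumes "a \<ge> 1" "x > 0" "y > 0" "n > 0" and eq: "a * x * y = n * (x + y)"
  shows "x \<le> n * n + n"
proof -
  have gt: "a * x > n" if "a * x * y = n * (x + y)" "x > 0" "y > 0" for x y
  proof (rule ccontr)
    assume "\<not> a * x > n"
    hence "a * x * y \<le> n * y" by (simp add: mult_right_mono)
    moreover have "n * y < n * (x + y)" using that \<open>n > 0\<close> by simp
    ultimately show False using that by simp
  qed
  have gx: "a * x > n" using gt[OF eq assms(2,3)] .
  have gy: "a * y > n" using gt[of y x] eq assms(2,3) by (simp add: algebra_simps)
  have ieq: "int a * int x * int y = int n * (int x + int y)" using arg_cong[OF eq, of int] by simp
  have "(int a * int x - int n) * (int a * int y - int n) =
     int a * (int a * int x * int y) - int a * int n * int x - int a * int n * int y + int n * int n"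
    by (simp add: algebra_simps)
  also have "\<dots> = int a * (int n * (int x + int y)) - int a * int n * int x - int a * int n * int y + int n * int n"
    using ieq by simp
  also have "\<dots> = int n * int n" by (simp add: algebra_simps)
  finally have prod: "(int a * int x - int n) * (int a * int y - int n) = int n * int n" .
  have "int n < int a * int x" using gx by (simp only: of_nat_mult[symmetric] of_nat_less_iff)
  hence p1: "int a * int x - int n \<ge> 1" by linarith
  have "int n < int a * int y" using gy by (simp only: of_nat_mult[symmetric] of_nat_less_iff)
  hence p2: "int a * int y - int n \<ge> 1" by linarith
  have "int a * int x - int n \<le> (int a * int x - int n) * (int a * int y - int n)"
    using p1 p2 by (simp add: mult_le_cancel_left1)
  hence "int a * int x \<le> int n * int n + int n" using prod by linarith
  moreover have "1 * int x \<le> int a * int x" using assms(1) by (intro mult_right_mono) auto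
  ultimately have "int x \<le> int (n * n + n)" by simp
  thus ?thesis by (simp only: of_nat_le_iff)
qed

lemma R_ne_0_iff:
  fixes a n :: nat
  assumes "a \<ge> 1" "n > 0"
  shows "R n a \<noteq> 0 \<longleftrightarrow> (\<exists>x y. x > 0 \<and> y > 0 \<and> a * x * y = n * (x + y))"
proof -
  define S where "S = {(x, y). x > 0 \<and> y > 0 \<and>
      (of_nat a / of_nat n :: rat) = 1 / of_nat x + 1 / of_nat y}"
  have S: "S = {(x, y). x > 0 \<and> y > 0 \<and> a * x * y = n * (x + y)}"
    unfolding S_def using eqn_iff assms(2) by auto
  have "S \<subseteq> {..n * n + n} \<times> {..n * n + n}"
  proof
    fix z assume "z \<in> S"
    then obtain x y where z: "z = (x, y)" "x > 0" "y > 0" "a * x * y = n * (x + y)" using S by auto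
    have "x \<le> n * n + n" using xbound[OF assms(1) z(2,3) assms(2) z(4)] .
    moreover have "y \<le> n * n + n" using xbound[OF assms(1) z(3,2) assms(2)] z(4) by (simp add: algebra_simps)
    ultimately show "z \<in> {..n * n + n} \<times> {..n * n + n}" using z by simp
  qed
  hence "finite S" by (rule finite_subset) simp
  hence "R n a \<noteq> 0 \<longleftrightarrow> S \<noteq> {}" unfolding R_def S_def[symmetric] by simp
  thus ?thesis using S by auto
qed

lemma notE_iff:
  fixes a n :: nat
  assumes a: "a \<ge> 3" and n: "n > 0" and cop: "gcd n a = 1"
  shows "n \<notin> Estar a \<longleftrightarrow> (\<exists>d1 d2. d1 dvd n \<and> d2 dvd n \<and> a dvd d1 + d2)"
proof -
  have "n \<notin> Estar a \<longleftrightarrow> R n a \<noteq> 0" using n cop by (simp add: Estar_def)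
  also have "\<dots> \<longleftrightarrow> (\<exists>x y. x > 0 \<and> y > 0 \<and> a * x * y = n * (x + y))"
    using a n by (intro R_ne_0_iff) auto
  also have "\<dots> \<longleftrightarrow> (\<exists>d1 d2. d1 dvd n \<and> d2 dvd n \<and> a dvd d1 + d2)"
  proof
    assume "\<exists>x y. x > 0 \<and> y > 0 \<and> a * x * y = n * (x + y)"
    then obtain x y where xy: "x > 0" "y > 0" "a * x * y = n * (x + y)" by blast
    define g where "g = gcd x y"
    define X where "X = x div g"
    define Y where "Y = y div g"
    have g0: "g > 0" using xy g_def by simp
    have x: "x = g * X" unfolding X_def g_def by simp
    have y: "y = g * Y" unfolding Y_def g_def by simp
    have cXY: "coprime X Y" unfolding X_def Y_def g_def using xy by (intro div_gcd_coprime) auto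
    have X0: "X > 0" "Y > 0" using x y xy by auto
    have "g * (a * g * X * Y) = g * (n * (X + Y))"
      using xy(3) unfolding x y by (simp add: algebra_simps)
    hence eq2: "a * g * X * Y = n * (X + Y)" using g0 by simp
    have "gcd X (X + Y) = gcd X Y" by (rule gcd_add2)
    also have "\<dots> = 1" using cXY by (rule coprime_iff_gcd_eq_1[THEN iffD1])
    finally have c1: "coprime X (X + Y)" by (rule coprime_iff_gcd_eq_1[THEN iffD2])
    have "gcd (X + Y) Y = gcd X Y" by (rule gcd_add1)
    also have "\<dots> = 1" using cXY by (rule coprime_iff_gcd_eq_1[THEN iffD1])
    finally have "coprime (X + Y) Y" by (rule coprime_iff_gcd_eq_1[THEN iffD2])
    hence c2: "coprime Y (X + Y)" by (rule coprime_commute[THEN iffD1])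
    have cp: "coprime (X * Y) (X + Y)" using c1 c2 by (rule coprime_mult_left_iff[THEN iffD2, OF conjI])
    have "n * (X + Y) = X * Y * (a * g)" using eq2 by (simp add: ac_simps)
    hence "X * Y dvd n * (X + Y)" by (rule dvdI)
    hence "X * Y dvd n" by (rule coprime_dvd_mult_left_iff[OF cp, THEN iffD1])
    then obtain k where k: "n = X * Y * k" by (rule dvdE)
    have "X * Y * (a * g) = a * g * X * Y" by (simp add: ac_simps)
    also have "\<dots> = n * (X + Y)" by (rule eq2)
    also have "\<dots> = X * Y * (k * (X + Y))" unfolding k by (simp add: ac_simps)
    finally have "X * Y * (a * g) = X * Y * (k * (X + Y))" .
    hence ag: "a * g = k * (X + Y)" using X0 by simp
    have "coprime n a" using cop by (rule coprime_iff_gcd_eq_1[THEN iffD2])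
    hence "coprime (X * Y * k) a" unfolding k .
    hence "coprime k a" by simp
    hence cak: "coprime a k" by (rule coprime_commute[THEN iffD1])
    have "k * (X + Y) = a * g" using ag by simp
    hence "a dvd k * (X + Y)" by (rule dvdI)
    hence "a dvd X + Y" by (rule coprime_dvd_mult_right_iff[OF cak, THEN iffD1])
    moreover have "X dvd n" "Y dvd n" using k by auto
    ultimately show "\<exists>d1 d2. d1 dvd n \<and> d2 dvd n \<and> a dvd d1 + d2" by blast
  next
    assume "\<exists>d1 d2. d1 dvd n \<and> d2 dvd n \<and> a dvd d1 + d2"
    then obtain d1 d2 where d: "d1 dvd n" "d2 dvd n" "a dvd d1 + d2" by blast
    obtain u where u: "n = d1 * u" using d(1) by (auto elim: dvdE)
    obtain v where v: "n = d2 * v" using d(2) by (auto elim: dvdE)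
    obtain c where c: "d1 + d2 = a * c" using d(3) by (auto elim: dvdE)
    have "d1 * u > 0" "d2 * v > 0" using u v n by auto
    hence pos: "u > 0" "v > 0" "d1 > 0" "d2 > 0" by auto
    have "c \<noteq> 0"
    proof
      assume "c = 0"
      hence "d1 + d2 = 0" using c by simp
      thus False using pos by simp
    qed
    hence "c > 0" by simp
    have key: "a * c * u * v = n * (u + v)"
    proof -
      have "a * c * u * v = (d1 + d2) * u * v" using c by simp
      also have "\<dots> = (d1 * u) * v + (d2 * v) * u" by (simp add: algebra_simps)
      also have "\<dots> = n * (u + v)" using u v by (simp add: algebra_simps)
      finally show ?thesis .
    qed
    have "a * (u * c) * (v * c) = n * (u * c + v * c)"
    proof -
      have "a * (u * c) * (v * c) = c * (a * c * u * v)" by (simp add: algebra_simps)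
      also have "\<dots> = c * (n * (u + v))" using key by simp
      finally show ?thesis by (simp add: algebra_simps)
    qed
    moreover have "u * c > 0" "v * c > 0" using pos \<open>c > 0\<close> by auto
    ultimately show "\<exists>x y. x > 0 \<and> y > 0 \<and> a * x * y = n * (x + y)" by blast
  qed
  finally show ?thesis .
qed




lemma units_tot: assumes n: "n > 1" shows "units_mod n = totatives n"
proof -
  have "x \<in> units_mod n \<longleftrightarrow> x \<in> totatives n" for x
  proof
    assume "x \<in> units_mod n"
    hence x: "x < n" "coprime x n" by (auto simp: units_mod_def)
    have "x \<noteq> 0"
    proof
      assume "x = 0"
      hence "coprime 0 n" using x by simp
      thus False using n by simp
    qed
    thus "x \<in> totatives n" using x by (auto simp: totatives_def)
  next
    assume "x \<in> totatives n"
    hence x: "0 < x" "x \<le> n" "coprime x n" by (auto simp: totatives_def)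
    have "x \<noteq> n" using x n by auto
    thus "x \<in> units_mod n" using x by (auto simp: units_mod_def)
  qed
  thus ?thesis by blast
qed

lemma mod_in_totatives:
  fixes x q :: nat
  assumes "q > 1" "coprime x q"
  shows "x mod q \<in> totatives q"
proof -
  have c: "coprime (x mod q) q" using assms by simp
  have "x mod q \<noteq> 0"
  proof
    assume "x mod q = 0"
    hence "coprime 0 q" using c by simp
    thus False using assms(1) by simp
  qed
  moreover have "x mod q < q" using assms(1) by simp
  ultimately show ?thesis using c by (auto simp: totatives_def)
qed

locale oc =
  fixes a p g :: nat
  assumes a3: "a \<ge> 3" and pp: "prime p" and po: "odd p" and pa: "p dvd a"
    and pr: "residue_primroot (ppart a p) g"
begin

definition "k = multiplicity p a"
definition "q = ppart a p"
definition "a' = a div q"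
definition "ph = totient q"

lemma a0: "a > 0" using a3 by simp
lemma pnu: "\<not> is_unit p" using pp not_prime_unit by blast
lemma kpos: "k > 0"
proof -
  have "p ^ 1 dvd a" using pa by simp
  hence "multiplicity p a \<ge> 1" using a0 pnu by (intro multiplicity_geI) auto
  thus ?thesis unfolding k_def by simp
qed
lemma q_eq: "q = p ^ k" unfolding q_def k_def ppart_def ..
lemma p3: "p \<ge> 3"
proof -
  have "p \<ge> 2" using pp by (rule prime_ge_2_nat)
  moreover have "p \<noteq> 2" using po by auto
  ultimately show ?thesis by simp
qed
lemma q3: "q \<ge> 3"
proof -
  have "p ^ 1 \<le> p ^ k" using kpos p3 by (intro power_increasing) auto
  thus ?thesis using p3 q_eq by simp
qed
lemma q_dvd: "q dvd a" unfolding q_def ppart_def by (rule multiplicity_dvd)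
lemma a_eq: "q * a' = a" unfolding a'_def using q_dvd by simp
lemma a'pos: "a' > 0"
proof (rule ccontr)
  assume "\<not> a' > 0"
  hence "q * a' = 0" by simp
  thus False using a_eq a0 by linarith
qed
lemma cop_q: "coprime x a \<Longrightarrow> coprime x q"
proof -
  assume "coprime x a"
  hence "coprime x (q * a')" by (simp only: a_eq)
  thus ?thesis by simp
qed
lemma cop_qa': "coprime q a'"
proof -
  have "\<not> p dvd a'" unfolding a'_def q_def ppart_def
    using a0 pnu by (intro multiplicity_decompose) auto
  hence "coprime p a'" using pp by (intro prime_imp_coprime)
  thus ?thesis unfolding q_eq by simp
qed
lemma ph_even: "even ph" unfolding ph_def using q3 by (intro totient_even) simp
lemma ph_pos: "ph > 0" unfolding ph_def using q3 by simp
lemma g_cop: "coprime q g" and ord_g: "ord q g = ph"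
  using pr unfolding residue_primroot_def q_def ph_def by auto

definition "v = multiplicity 2 ph"
definition "w = ph div 2 ^ v"
lemma ph_eq: "ph = 2 ^ v * w" unfolding w_def v_def by (simp add: multiplicity_dvd)
lemma w_odd: "odd w"
  unfolding w_def v_def using ph_pos by (intro multiplicity_decompose) auto
lemma v_pos: "v \<ge> 1" unfolding v_def
proof (rule multiplicity_geI)
  show "ph \<noteq> 0" using ph_pos by simp
  show "\<not> is_unit (2::nat)" by simp
  show "2 ^ 1 dvd ph" using ph_even by simp
qed
lemma w_pos: "w > 0" using ph_eq ph_pos by (cases w) auto

lemma exp_cong: "[g ^ i = g ^ j] (mod q) \<longleftrightarrow> [i = j] (mod ph)"
  using order_divides_expdiff[OF g_cop] ord_g by simp

lemma oddord_iff:
  assumes "coprime y q"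
  shows "odd (ord q y) \<longleftrightarrow> [y ^ w = 1] (mod q)"
proof -
  have "[y ^ ph = 1] (mod q)" unfolding ph_def using assms by (rule euler_theorem)
  hence "ord q y dvd ph" by (rule ord_divides[THEN iffD1])
  hence od: "ord q y dvd 2 ^ v * w" using ph_eq by simp
  have "odd (ord q y) \<longleftrightarrow> ord q y dvd w"
  proof
    assume "odd (ord q y)"
    hence "coprime (ord q y) (2 ^ v)" by simp
    thus "ord q y dvd w" using od by (simp add: coprime_dvd_mult_right_iff)
  next
    assume "ord q y dvd w"
    thus "odd (ord q y)" using w_odd by (auto elim: dvdE)
  qed
  also have "\<dots> \<longleftrightarrow> [y ^ w = 1] (mod q)" by (rule ord_divides[symmetric])
  finally show ?thesis .
qed

lemma gpow_oddord_iff: "odd (ord q (g ^ i)) \<longleftrightarrow> 2 ^ v dvd i"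
proof -
  have "coprime (g ^ i) q" using g_cop by (simp add: coprime_commute)
  hence "odd (ord q (g ^ i)) \<longleftrightarrow> [(g ^ i) ^ w = 1] (mod q)" by (rule oddord_iff)
  also have "\<dots> \<longleftrightarrow> [g ^ (i * w) = 1] (mod q)" by (simp add: power_mult)
  also have "\<dots> \<longleftrightarrow> ord q g dvd i * w" by (rule ord_divides)
  also have "\<dots> \<longleftrightarrow> 2 ^ v * w dvd i * w" using ord_g ph_eq by simp
  also have "\<dots> \<longleftrightarrow> 2 ^ v dvd i" using w_pos by simp
  finally show ?thesis .
qed

lemma q1: "q > 1" using q3 by simp

definition "Oq = {y \<in> totatives q. odd (ord q y)}"

lemma gen: "bij_betw (\<lambda>i. g ^ i mod q) {..<ph} (totatives q)"
  unfolding ph_def using q1 pr unfolding q_def by (intro residue_primroot_is_generator) auto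

lemma card_Oq: "card Oq = w"
proof -
  define I where "I = {i. i < ph \<and> 2 ^ v dvd i}"
  have inj: "inj_on (\<lambda>i. g ^ i mod q) I"
    using gen unfolding bij_betw_def I_def by (auto intro: inj_on_subset)
  have "Oq = (\<lambda>i. g ^ i mod q) ` I"
  proof (intro equalityI subsetI)
    fix y assume y: "y \<in> Oq"
    hence "y \<in> totatives q" by (simp add: Oq_def)
    then obtain i where i: "i < ph" "y = g ^ i mod q" using gen unfolding bij_betw_def by auto
    have "odd (ord q (g ^ i))" using y i by (simp add: Oq_def)
    hence "2 ^ v dvd i" by (simp add: gpow_oddord_iff)
    thus "y \<in> (\<lambda>i. g ^ i mod q) ` I" using i I_def by auto
  next
    fix y assume "y \<in> (\<lambda>i. g ^ i mod q) ` I"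
    then obtain i where i: "i < ph" "2 ^ v dvd i" "y = g ^ i mod q" using I_def by auto
    have "y \<in> totatives q" using gen i unfolding bij_betw_def by auto
    moreover have "odd (ord q y)" using i gpow_oddord_iff by simp
    ultimately show "y \<in> Oq" by (simp add: Oq_def)
  qed
  hence "card Oq = card I" using inj by (simp add: card_image)
  also have "I = (\<lambda>j. 2 ^ v * j) ` {..<w}"
  proof (intro equalityI subsetI)
    fix i assume "i \<in> I"
    then obtain j where j: "i = 2 ^ v * j" "i < ph" unfolding I_def by (auto elim: dvdE)
    hence "j < w" using ph_eq by simp
    thus "i \<in> (\<lambda>j. 2 ^ v * j) ` {..<w}" using j by auto
  next
    fix i assume "i \<in> (\<lambda>j. 2 ^ v * j) ` {..<w}"
    then obtain j where j: "i = 2 ^ v * j" "j < w" by auto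
    hence "i < ph" using ph_eq by simp
    thus "i \<in> I" using j unfolding I_def by simp
  qed
  also have "card \<dots> = w" by (subst card_image) (auto simp: inj_on_def)
  finally show ?thesis .
qed

lemma H_eq: "H_odd a p = {x \<in> totatives a. x mod q \<in> Oq}"
proof -
  have "units_mod a = totatives a" using a3 by (intro units_tot) simp
  moreover have "odd (ord q x) \<longleftrightarrow> x mod q \<in> Oq" if "x \<in> totatives a" for x
  proof -
    have "coprime x a" using that by (simp add: totatives_def)
    hence "coprime x q" by (rule cop_q)
    hence "x mod q \<in> totatives q" using q1 by (intro mod_in_totatives)
    thus ?thesis by (simp add: Oq_def)
  qed
  ultimately show ?thesis unfolding H_odd_def q_def[symmetric] by auto
qed

lemma card_H: "card (H_odd a p) * 2 ^ v = totient a"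
proof -
  have "card (H_odd a p) = w * totient a'"
  proof (cases "a' = 1")
    case True
    hence aq: "q = a" using a_eq by simp
    have "H_odd a p = Oq"
    proof -
      have "x mod q = x" if "x \<in> totatives q" for x
      proof -
        have "x \<le> q" "coprime x q" using that by (auto simp: totatives_def)
        moreover have "x \<noteq> q" using q1 \<open>coprime x q\<close> by auto
        ultimately show ?thesis by simp
      qed
      moreover have "totatives a = totatives q" using aq by simp
      ultimately show ?thesis unfolding H_eq by (auto simp: Oq_def)
    qed
    thus ?thesis using card_Oq True by simp
  next
    case False
    hence a'1: "a' > 1" using a'pos by simp
    define f where "f = (\<lambda>x. (x mod q, x mod a'))"
    have "bij_betw (\<lambda>x. (x mod q, x mod a')) (totatives (q * a')) (totatives q \<times> totatives a')"
      using q1 a'1 cop_qa' by (rule bij_betw_totatives)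
    hence bij: "bij_betw f (totatives a) (totatives q \<times> totatives a')"
      unfolding a_eq f_def .
    have "H_odd a p = {x \<in> totatives a. f x \<in> Oq \<times> totatives a'}"
    proof -
      have "f x \<in> totatives q \<times> totatives a'" if "x \<in> totatives a" for x
        using bij that unfolding bij_betw_def by auto
      thus ?thesis unfolding H_eq f_def by auto
    qed
    moreover have "bij_betw f {x \<in> totatives a. f x \<in> Oq \<times> totatives a'} (Oq \<times> totatives a')"
    proof -
      have sub: "Oq \<times> totatives a' \<subseteq> totatives q \<times> totatives a'" by (auto simp: Oq_def)
      have "inj_on f {x \<in> totatives a. f x \<in> Oq \<times> totatives a'}"
        using bij unfolding bij_betw_def by (auto intro: inj_on_subset)
      moreover have "f ` {x \<in> totatives a. f x \<in> Oq \<times> totatives a'} = Oq \<times> totatives a'"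
      proof
        show "f ` {x \<in> totatives a. f x \<in> Oq \<times> totatives a'} \<subseteq> Oq \<times> totatives a'" by auto
        show "Oq \<times> totatives a' \<subseteq> f ` {x \<in> totatives a. f x \<in> Oq \<times> totatives a'}"
        proof
          fix z assume z: "z \<in> Oq \<times> totatives a'"
          hence "z \<in> f ` totatives a" using bij sub unfolding bij_betw_def by auto
          then obtain x where x: "x \<in> totatives a" "z = f x" by blast
          show "z \<in> f ` {x \<in> totatives a. f x \<in> Oq \<times> totatives a'}"
            using x z by (intro image_eqI[of z f x]) auto
        qed
      qed
      ultimately show ?thesis unfolding bij_betw_def by simp
    qed
    ultimately have "card (H_odd a p) = card (Oq \<times> totatives a')" by (simp add: bij_betw_same_card)
    also have "\<dots> = w * totient a'" by (simp add: card_cartesian_product card_Oq totient_def)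
    finally show ?thesis .
  qed
  hence "card (H_odd a p) * 2 ^ v = ph * totient a'" using ph_eq by (simp add: ac_simps)
  also have "\<dots> = totient (q * a')" unfolding ph_def using cop_qa' by (simp add: totient_mult_coprime)
  also have "\<dots> = totient a" unfolding a_eq ..
  finally show ?thesis .
qed

definition kap :: "nat \<Rightarrow> nat" where "kap x = (SOME i. i < ph \<and> [g ^ i = x] (mod q))"

lemma kap: assumes "coprime x q" shows "kap x < ph" "[g ^ kap x = x] (mod q)"
proof -
  have "x mod q \<in> totatives q" using q1 assms by (rule mod_in_totatives)
  hence "x mod q \<in> (\<lambda>i. g ^ i mod q) ` {..<ph}" using gen unfolding bij_betw_def by simp
  then obtain i where "i \<in> {..<ph}" "x mod q = g ^ i mod q" by (rule imageE)
  hence i: "i < ph" "g ^ i mod q = x mod q" by auto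
  hence "\<exists>i. i < ph \<and> [g ^ i = x] (mod q)" unfolding cong_def by blast
  hence "kap x < ph \<and> [g ^ kap x = x] (mod q)" unfolding kap_def by (rule someI_ex)
  thus "kap x < ph" "[g ^ kap x = x] (mod q)" by auto
qed

lemma half: "q dvd g ^ (ph div 2) + 1"
proof -
  define y where "y = g ^ (ph div 2)"
  have "g \<noteq> 0"
  proof
    assume "g = 0"
    hence "coprime q 0" using g_cop by simp
    thus False using q1 by simp
  qed
  hence y1: "y \<ge> 1" unfolding y_def by simp
  have "y ^ 2 = g ^ ph" unfolding y_def using ph_even by (simp add: power_mult[symmetric])
  moreover have "[g ^ ph = 1] (mod q)" unfolding ph_def using g_cop by (intro euler_theorem) (simp add: coprime_commute)
  ultimately have "[y ^ 2 = 1] (mod q)" by simp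
  hence "q dvd y ^ 2 - 1" by (rule cong_to_1_nat)
  also have "y ^ 2 - 1 = (y - 1) * (y + 1)" using y1 by (simp add: power2_eq_square algebra_simps)
  finally have d: "q dvd (y - 1) * (y + 1)" .
  show ?thesis
  proof (cases "p dvd y - 1")
    case True
    have "\<not> p dvd y + 1"
    proof
      assume "p dvd y + 1"
      hence "p dvd (y + 1) - (y - 1)" using True by (rule dvd_diff_nat)
      hence "p dvd 2" using y1 by simp
      thus False using p3 by (auto dest: dvd_imp_le)
    qed
    hence "coprime p (y + 1)" using pp by (intro prime_imp_coprime)
    hence c: "coprime q (y + 1)" unfolding q_eq by simp
    have "q dvd y - 1" using iffD1[OF coprime_dvd_mult_left_iff[OF c] d] .
    hence "[y = 1] (mod q)" using y1 by (simp add: cong_altdef_nat)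
    hence "ord q g dvd ph div 2" unfolding y_def by (simp add: ord_divides')
    hence "ph dvd ph div 2" using ord_g by simp
    moreover have "ph div 2 > 0" "ph div 2 < ph" using ph_pos ph_even by auto
    ultimately have False by (auto dest: dvd_imp_le)
    thus ?thesis ..
  next
    case False
    hence "coprime p (y - 1)" using pp by (intro prime_imp_coprime)
    hence c: "coprime q (y - 1)" unfolding q_eq by simp
    have "q dvd y + 1" using iffD1[OF coprime_dvd_mult_right_iff[OF c] d] .
    thus ?thesis unfolding y_def .
  qed
qed

lemma H_iff:
  assumes "coprime x a"
  shows "x mod a \<in> H_odd a p \<longleftrightarrow> 2 ^ v dvd kap x"
proof -
  have xq: "coprime x q" using assms by (rule cop_q)
  have "x mod a \<in> totatives a"
    using assms a3 by (intro mod_in_totatives) auto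
  hence "x mod a \<in> H_odd a p \<longleftrightarrow> x mod a mod q \<in> Oq" unfolding H_eq by simp
  also have "x mod a mod q = x mod q" using q_dvd by (rule mod_mod_cancel)
  also have "x mod q \<in> Oq \<longleftrightarrow> odd (ord q x)"
    using mod_in_totatives[OF q1 xq] by (simp add: Oq_def)
  also have "ord q x = ord q (g ^ kap x)" using kap(2)[OF xq] by (intro ord_cong) (simp add: cong_sym)
  also have "odd \<dots> \<longleftrightarrow> 2 ^ v dvd kap x" by (rule gpow_oddord_iff)
  finally show ?thesis .
qed

end

locale oc2 = oc +
  assumes card: "totient a = 2 ^ m_of a * card (H_odd a p)"
begin

lemma mm: "m_of a = v"
proof -
  have "totient a > 0" using a0 by simp
  hence "card (H_odd a p) > 0" using card by (cases "card (H_odd a p)") auto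
  moreover have "2 ^ m_of a * card (H_odd a p) = 2 ^ v * card (H_odd a p)" using card card_H by (metis mult.commute)
  ultimately have "(2::nat) ^ m_of a = 2 ^ v" by (metis mult_cancel_right neq0_conv)
  thus ?thesis by simp
qed

end



lemma nat_cong_int_dvd: "[x = y] (mod m) \<Longrightarrow> int m dvd int x - int y"
  by (simp add: cong_int_iff[symmetric] cong_iff_dvd_diff)

lemma dvd_cop: fixes r n a :: nat shows "r dvd n \<Longrightarrow> coprime n a \<Longrightarrow> coprime r a"
  by (auto elim!: dvdE)

lemma prod_cop: "(\<forall>x\<in>#M. coprime x (a::nat)) \<Longrightarrow> coprime (prod_mset M) a"
  by (induction M) auto

lemma pf_cop:
  assumes "coprime n (a::nat)" "r \<in># prime_factorization n"
  shows "coprime r a"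
  using assms by (intro dvd_cop[of r n a]) (auto intro: in_prime_factors_imp_dvd)

context oc
begin

definition K :: "nat multiset \<Rightarrow> nat" where "K M = sum_mset (image_mset kap M)"

lemma K_add[simp]: "K (A + B) = K A + K B" by (simp add: K_def)
lemma K_add_mset[simp]: "K (add_mset x A) = kap x + K A" by (simp add: K_def)
lemma K_empty[simp]: "K {#} = 0" by (simp add: K_def)

lemma Kint: "sum_mset (image_mset (\<lambda>r. int (kap r)) M) = int (K M)"
  by (induction M) auto

lemma K_cong: "(\<forall>x\<in>#M. coprime x q) \<Longrightarrow> [g ^ K M = prod_mset M] (mod q)"
proof (induction M)
  case empty
  show ?case by simp
next
  case (add x M)
  hence "[g ^ kap x = x] (mod q)" "[g ^ K M = prod_mset M] (mod q)" using kap(2) by auto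
  hence "[g ^ kap x * g ^ K M = x * prod_mset M] (mod q)" by (rule cong_mult)
  thus ?case by (simp add: power_add)
qed

lemma K_dvd: "(\<forall>x\<in>#M. 2 ^ v dvd kap x) \<Longrightarrow> 2 ^ v dvd K M"
  by (induction M) auto

lemma ph_half: "ph div 2 = 2 ^ (v - 1) * w"
proof -
  have "ph = 2 * (2 ^ (v - 1) * w)" using ph_eq v_pos by (cases v) auto
  thus ?thesis by simp
qed

lemma halfn: "[g ^ (ph div 2) = q - 1] (mod q)"
proof -
  have "[g ^ (ph div 2) + 1 = 0] (mod q)" using half by (simp add: cong_0_iff)
  moreover have "[q - 1 + 1 = 0] (mod q)" using q1 by (simp add: cong_0_iff)
  ultimately have "[g ^ (ph div 2) + 1 = q - 1 + 1] (mod q)" by (metis cong_sym cong_trans)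
  thus ?thesis by (simp only: cong_add_rcancel_nat)
qed

end

context oc2
begin

lemma K2:
  fixes n :: nat
  assumes n: "n > 0" and cop: "gcd n a = 1"
    and cover: "H_odd a p \<subseteq> (\<lambda>r. r mod a) ` set_mset (prime_factorization n)"
  defines "T \<equiv> filter_mset (\<lambda>r. r mod a \<notin> H_odd a p) (prime_factorization n)"
  shows "(\<exists>d1 d2. d1 dvd n \<and> d2 dvd n \<and> a dvd d1 + d2) \<longleftrightarrow>
         (\<exists>s. achf (\<lambda>r. int (kap r)) T s \<and> [s = 2 ^ (v - 1)] (mod 2 ^ v))"
proof
  have copn: "coprime n a" using cop by (rule coprime_iff_gcd_eq_1[THEN iffD2])
  have pfa: "coprime r a" if "r \<in># prime_factorization n" for r using pf_cop[OF copn that] .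
  have pfq: "coprime r q" if "r \<in># prime_factorization n" for r using cop_q[OF pfa[OF that]] .
  have v2: "(2::nat) ^ v dvd ph" using ph_eq by simp
  have vv: "(2::int) ^ v = 2 * 2 ^ (v - 1)" using v_pos by (cases v) auto
  obtain j where wj: "w = 2 * j + 1" using w_odd by (metis oddE)
  assume "\<exists>d1 d2. d1 dvd n \<and> d2 dvd n \<and> a dvd d1 + d2"
  then obtain d1 d2 where d: "d1 dvd n" "d2 dvd n" "a dvd d1 + d2" by blast
  have dpos: "d1 > 0" "d2 > 0" using d n by (auto intro: Nat.gr0I)
  define F1 where "F1 = prime_factorization d1"
  define F2 where "F2 = prime_factorization d2"
  have F1s: "F1 \<subseteq># prime_factorization n" unfolding F1_def
    using dpos n d by (subst prime_factorization_subset_iff_dvd) auto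
  have F2s: "F2 \<subseteq># prime_factorization n" unfolding F2_def
    using dpos n d by (subst prime_factorization_subset_iff_dvd) auto
  have P1: "prod_mset F1 = d1" "prod_mset F2 = d2" unfolding F1_def F2_def using dpos by auto
  define A0 where "A0 = filter_mset (\<lambda>r. r mod a \<notin> H_odd a p) F1"
  define C1 where "C1 = filter_mset (\<lambda>r. \<not> r mod a \<notin> H_odd a p) F1"
  define B0 where "B0 = filter_mset (\<lambda>r. r mod a \<notin> H_odd a p) F2"
  define C2 where "C2 = filter_mset (\<lambda>r. \<not> r mod a \<notin> H_odd a p) F2"
  have F1p: "F1 = A0 + C1" unfolding A0_def C1_def by (rule multiset_partition)
  have F2p: "F2 = B0 + C2" unfolding B0_def C2_def by (rule multiset_partition)
  have AT: "A0 \<subseteq># T" unfolding A0_def T_def using F1s by (rule multiset_filter_mono)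
  have BT: "B0 \<subseteq># T" unfolding B0_def T_def using F2s by (rule multiset_filter_mono)
  have inpf1: "x \<in># prime_factorization n" if "x \<in># F1" for x using F1s that by (rule mset_subset_eqD)
  have inpf2: "x \<in># prime_factorization n" if "x \<in># F2" for x using F2s that by (rule mset_subset_eqD)
  have dC1: "2 ^ v dvd K C1"
  proof (rule K_dvd, rule ballI)
    fix x assume "x \<in># C1"
    hence "x \<in># F1" "x mod a \<in> H_odd a p" unfolding C1_def by auto
    thus "2 ^ v dvd kap x" using H_iff pfa inpf1 by blast
  qed
  have dC2: "2 ^ v dvd K C2"
  proof (rule K_dvd, rule ballI)
    fix x assume "x \<in># C2"
    hence "x \<in># F2" "x mod a \<in> H_odd a p" unfolding C2_def by auto
    thus "2 ^ v dvd kap x" using H_iff pfa inpf2 by blast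
  qed
  have c1: "[g ^ K F1 = d1] (mod q)"
    using K_cong[of F1] P1 pfq inpf1 by simp
  have c2: "[g ^ K F2 = d2] (mod q)"
    using K_cong[of F2] P1 pfq inpf2 by simp
  have "q dvd d1 + d2" using q_dvd d(3) by (rule dvd_trans)
  hence "[d1 + d2 = 0] (mod q)" by (simp add: cong_0_iff)
  moreover have "[(q - 1) * d2 + d2 = 0] (mod q)"
  proof -
    have "(q - 1) * d2 + d2 = q * d2" using q1 by (cases q) auto
    thus ?thesis by (simp add: cong_0_iff)
  qed
  ultimately have "[d1 + d2 = (q - 1) * d2 + d2] (mod q)" by (metis cong_sym cong_trans)
  hence c3: "[d1 = (q - 1) * d2] (mod q)" by (simp only: cong_add_rcancel_nat)
  have "[g ^ (ph div 2) * g ^ K F2 = (q - 1) * d2] (mod q)"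
    using halfn c2 by (rule cong_mult)
  hence "[g ^ (ph div 2 + K F2) = d1] (mod q)" using c3 by (simp add: power_add) (metis cong_sym cong_trans)
  hence "[g ^ (ph div 2 + K F2) = g ^ K F1] (mod q)" using c1 by (metis cong_sym cong_trans)
  hence "[ph div 2 + K F2 = K F1] (mod ph)" by (simp only: exp_cong)
  hence "[ph div 2 + K F2 = K F1] (mod 2 ^ v)" using v2 by (rule cong_dvd_modulus_nat)
  hence "int (2 ^ v) dvd int (ph div 2 + K F2) - int (K F1)" by (rule nat_cong_int_dvd)
  hence "(2::int) ^ v dvd int (ph div 2) + int (K F2) - int (K F1)" by simp
  then obtain c where c: "int (ph div 2) + int (K F2) - int (K F1) = 2 ^ v * c" by (rule dvdE)
  obtain c1' where c1': "int (K C1) = 2 ^ v * c1'" using dC1 by (auto elim!: dvdE)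
  obtain c2' where c2': "int (K C2) = 2 ^ v * c2'" using dC2 by (auto elim!: dvdE)
  have iph: "int (ph div 2) = 2 ^ (v - 1) * (2 * int j + 1)" using ph_half wj by (simp add: algebra_simps)
  define s where "s = int (K A0) - int (K B0)"
  have "s - 2 ^ (v - 1) = 2 ^ v * (c2' - c1' - c + int j)"
  proof -
    have "int (K F1) = int (K A0) + int (K C1)" "int (K F2) = int (K B0) + int (K C2)"
      using F1p F2p by simp_all
    thus ?thesis unfolding s_def using c c1' c2' iph vv by (simp add: algebra_simps)
  qed
  hence "[s = 2 ^ (v - 1)] (mod 2 ^ v)" unfolding cong_iff_dvd_diff by simp
  moreover have "achf (\<lambda>r. int (kap r)) T s"
    using achf_diff[OF AT BT, of "\<lambda>r. int (kap r)"] unfolding s_def Kint .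
  ultimately show "\<exists>s. achf (\<lambda>r. int (kap r)) T s \<and> [s = 2 ^ (v - 1)] (mod 2 ^ v)" by blast
next
  have copn: "coprime n a" using cop by (rule coprime_iff_gcd_eq_1[THEN iffD2])
  have pfa: "coprime r a" if "r \<in># prime_factorization n" for r using pf_cop[OF copn that] .
  have pfq: "coprime r q" if "r \<in># prime_factorization n" for r using cop_q[OF pfa[OF that]] .
  have v2: "(2::nat) ^ v dvd ph" using ph_eq by simp
  have vv: "(2::int) ^ v = 2 * 2 ^ (v - 1)" using v_pos by (cases v) auto
  obtain j where wj: "w = 2 * j + 1" using w_odd by (metis oddE)
  have Tsub: "T \<subseteq># prime_factorization n" unfolding T_def by simp
  assume "\<exists>s. achf (\<lambda>r. int (kap r)) T s \<and> [s = 2 ^ (v - 1)] (mod 2 ^ v)"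
  then obtain s A0 B0 where AB: "A0 + B0 \<subseteq># T"
    and s: "s = int (K A0) - int (K B0)" and sc: "[s = 2 ^ (v - 1)] (mod 2 ^ v)"
    unfolding achf_def Kint by blast
  have AT: "A0 \<subseteq># T" "B0 \<subseteq># T"
    using subset_mset.order_trans[OF mset_subset_eq_add_left AB] subset_mset.order_trans[OF mset_subset_eq_add_right AB] by auto
  have Apf: "A0 \<subseteq># prime_factorization n" "B0 \<subseteq># prime_factorization n"
    using subset_mset.order_trans[OF AT(1) Tsub] subset_mset.order_trans[OF AT(2) Tsub] by auto
  have inA: "x \<in># prime_factorization n" if "x \<in># A0" for x using Apf(1) that by (rule mset_subset_eqD)
  have inB: "x \<in># prime_factorization n" if "x \<in># B0" for x using Apf(2) that by (rule mset_subset_eqD)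
  define P1 where "P1 = prod_mset A0"
  define P2 where "P2 = prod_mset B0"
  have cP1: "coprime P1 a" unfolding P1_def using pfa inA by (intro prod_cop) auto
  have cP2: "coprime P2 a" unfolding P2_def using pfa inB by (intro prod_cop) auto
  obtain i where i: "[P2 * i = Suc 0] (mod a)" using cong_solve_coprime_nat[OF cP2] by blast
  have "coprime (P2 * i) a" using cong_imp_coprime[OF cong_sym[OF i]] by simp
  hence ci: "coprime i a" by simp
  define h where "h = ((a - 1) * P1 * i) mod a"
  have "coprime (a - 1) a" using a0 by (rule coprime_diff_one_left_nat)
  hence ch: "coprime h a" unfolding h_def using a0 cP1 ci by simp
  have hmod: "h mod a = h" unfolding h_def by simp
  have hP2: "[h * P2 = (a - 1) * P1] (mod a)"
  proof -
    have "[h * P2 = ((a - 1) * P1 * i) * P2] (mod a)" unfolding h_def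
      by (intro cong_mult) (auto simp: cong_def)
    moreover have "((a - 1) * P1 * i) * P2 = (a - 1) * P1 * (P2 * i)" by (simp add: ac_simps)
    ultimately have "[h * P2 = (a - 1) * P1 * (P2 * i)] (mod a)" by (simp only:)
    also have "[(a - 1) * P1 * (P2 * i) = (a - 1) * P1 * Suc 0] (mod a)" using i by (intro cong_mult) auto
    finally show ?thesis by simp
  qed
  have hq: "coprime h q" using cop_q[OF ch] .
  have ck: "[g ^ kap h = h] (mod q)" using kap(2)[OF hq] .
  have cA: "[g ^ K A0 = P1] (mod q)"
    using K_cong[of A0] pfq inA unfolding P1_def by simp
  have cB: "[g ^ K B0 = P2] (mod q)"
    using K_cong[of B0] pfq inB unfolding P2_def by simp
  have hq2: "[h * P2 = (a - 1) * P1] (mod q)" using hP2 q_dvd by (rule cong_dvd_modulus_nat)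
  have "[a - 1 = q - 1] (mod q)"
  proof -
    have "[a - 1 + 1 = 0] (mod q)" using a0 q_dvd by (simp add: cong_0_iff)
    moreover have "[q - 1 + 1 = 0] (mod q)" using q1 by (simp add: cong_0_iff)
    ultimately have "[a - 1 + 1 = q - 1 + 1] (mod q)" by (metis cong_sym cong_trans)
    thus ?thesis by (simp only: cong_add_rcancel_nat)
  qed
  hence "[(a - 1) * P1 = (q - 1) * P1] (mod q)" by (intro cong_mult) auto
  hence hm: "[h * P2 = (q - 1) * P1] (mod q)" using hq2 by (metis cong_trans)
  have "[g ^ kap h * g ^ K B0 = h * P2] (mod q)" using ck cB by (rule cong_mult)
  hence l: "[g ^ (kap h + K B0) = (q - 1) * P1] (mod q)" using hm by (simp add: power_add) (metis cong_trans)
  have "[g ^ (ph div 2) * g ^ K A0 = (q - 1) * P1] (mod q)" using halfn cA by (rule cong_mult)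
  hence r: "[g ^ (ph div 2 + K A0) = (q - 1) * P1] (mod q)" by (simp add: power_add)
  have "[g ^ (kap h + K B0) = g ^ (ph div 2 + K A0)] (mod q)"
    using l r by (metis cong_sym cong_trans)
  hence "[kap h + K B0 = ph div 2 + K A0] (mod ph)" by (simp only: exp_cong)
  hence "[kap h + K B0 = ph div 2 + K A0] (mod 2 ^ v)" using v2 by (rule cong_dvd_modulus_nat)
  hence "int (2 ^ v) dvd int (kap h + K B0) - int (ph div 2 + K A0)" by (rule nat_cong_int_dvd)
  hence "(2::int) ^ v dvd int (kap h) + int (K B0) - (int (ph div 2) + int (K A0))" by simp
  then obtain c where c: "int (kap h) + int (K B0) - (int (ph div 2) + int (K A0)) = 2 ^ v * c" by (rule dvdE)
  obtain c' where c': "s - 2 ^ (v - 1) = 2 ^ v * c'" using sc unfolding cong_iff_dvd_diff by (auto elim: dvdE)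
  have iph: "int (ph div 2) = 2 ^ (v - 1) * (2 * int j + 1)" using ph_half wj by (simp add: algebra_simps)
  have "int (kap h) = 2 ^ v * (c + c' + int j + 1)"
    using c c' s iph vv by (simp add: algebra_simps)
  hence "int (2 ^ v) dvd int (kap h)" by simp
  hence "2 ^ v dvd kap h" by (simp only: int_dvd_int_iff)
  hence hH: "h \<in> H_odd a p" using H_iff[OF ch] hmod by simp
  then obtain r' where r': "r' \<in># prime_factorization n" "r' mod a = h" using cover by auto
  define C where "C = filter_mset (\<lambda>r. \<not> r mod a \<notin> H_odd a p) (prime_factorization n)"
  have pfp: "prime_factorization n = T + C" unfolding T_def C_def by (rule multiset_partition)
  have "r' \<in># C" unfolding C_def using r' hH by simp
  hence "{#r'#} \<subseteq># C" by simp
  hence "B0 + {#r'#} \<subseteq># T + C" using AT(2) by (rule subset_mset.add_mono[rotated])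
  hence sub2: "add_mset r' B0 \<subseteq># prime_factorization n" using pfp by simp
  have "P1 dvd n" unfolding P1_def using prod_mset_subset_imp_dvd[OF Apf(1)] n by simp
  moreover have "r' * P2 dvd n" unfolding P2_def using prod_mset_subset_imp_dvd[OF sub2] n by simp
  moreover have "a dvd P1 + r' * P2"
  proof -
    have "[r' = h] (mod a)" using r' by (simp add: cong_def hmod)
    hence "[r' * P2 = h * P2] (mod a)" by (intro cong_mult) auto
    hence "[r' * P2 = (a - 1) * P1] (mod a)" using hP2 by (rule cong_trans)
    hence "[P1 + r' * P2 = P1 + (a - 1) * P1] (mod a)" by (intro cong_add) auto
    moreover have "P1 + (a - 1) * P1 = a * P1" using a0 by (cases a) auto
    ultimately have "[P1 + r' * P2 = 0] (mod a)" by (simp add: cong_def)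
    thus ?thesis by (simp add: cong_0_iff)
  qed
  ultimately show "\<exists>d1 d2. d1 dvd n \<and> d2 dvd n \<and> a dvd d1 + d2" by blast
qed

end



definition pr :: "int \<Rightarrow> nat \<times> int" where
  "pr x = (multiplicity 2 x, x div 2 ^ multiplicity 2 x)"

lemma pr_val: "pval (pr x) = x"
  unfolding pval_def pr_def by (simp add: multiplicity_dvd)

lemma pr_odd: "x \<noteq> 0 \<Longrightarrow> odd (snd (pr x))"
  unfolding pr_def by (simp add: multiplicity_decompose)

lemma pr_lt: "x \<noteq> 0 \<Longrightarrow> \<not> 2 ^ m dvd x \<Longrightarrow> fst (pr x) < m"
  unfolding pr_def by (simp add: multiplicity_lessI)

lemma pr_ge: "x \<noteq> 0 \<Longrightarrow> 2 ^ k dvd x \<Longrightarrow> fst (pr x) \<ge> k"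
  unfolding pr_def by (simp add: multiplicity_geI)

lemma wt_ge_size: "wt P \<ge> size P"
proof (induction P)
  case empty
  show ?case by simp
next
  case (add x P)
  have "(1::nat) \<le> 2 ^ fst x" by simp
  moreover have "wt (add_mset x P) = 2 ^ fst x + wt P" by simp
  moreover have "size (add_mset x P) = Suc (size P)" by simp
  ultimately show ?case using add.IH by linarith
qed

context oc2
begin

definition fk :: "nat \<Rightarrow> int" where "fk r = int (kap r)"

lemma T_props:
  assumes cop: "gcd n a = 1" and r: "r \<in># filter_mset (\<lambda>r. r mod a \<notin> H_odd a p) (prime_factorization n)"
  shows "fk r \<noteq> 0" "\<not> 2 ^ v dvd fk r"
proof -
  have copn: "coprime n a" using cop by (rule coprime_iff_gcd_eq_1[THEN iffD2])
  have "coprime r a" using pf_cop[OF copn] r by simp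
  hence "\<not> 2 ^ v dvd kap r" using H_iff r by simp
  thus nd: "\<not> 2 ^ v dvd fk r" unfolding fk_def by (metis int_dvd_int_iff of_nat_numeral of_nat_power)
  show "fk r \<noteq> 0" using nd by auto
qed

lemma finish:
  fixes n :: nat
  assumes n: "n > 0" and cop: "gcd n a = 1"
    and cover: "H_odd a p \<subseteq> (\<lambda>r. r mod a) ` set_mset (prime_factorization n)"
    and ach: "achf pval (image_mset (pr \<circ> fk) (filter_mset (\<lambda>r. r mod a \<notin> H_odd a p) (prime_factorization n))) s"
    and sc: "[s = 2 ^ (v - 1)] (mod 2 ^ v)"
  shows "n \<notin> Estar a"
proof -
  have "achf (pval \<circ> (pr \<circ> fk)) (filter_mset (\<lambda>r. r mod a \<notin> H_odd a p) (prime_factorization n)) s"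
    using ach by (rule achf_image)
  moreover have "pval \<circ> (pr \<circ> fk) = (\<lambda>r. int (kap r))" by (rule ext) (simp add: pr_val fk_def)
  ultimately have "achf (\<lambda>r. int (kap r)) (filter_mset (\<lambda>r. r mod a \<notin> H_odd a p) (prime_factorization n)) s" by simp
  hence "\<exists>d1 d2. d1 dvd n \<and> d2 dvd n \<and> a dvd d1 + d2" using K2[OF n cop cover] sc by blast
  thus ?thesis using notE_iff[OF a3 n cop] by blast
qed

lemma part_i:
  fixes n :: nat
  assumes n: "n > 0" and cop: "gcd n a = 1"
    and cover: "H_odd a p \<subseteq> (\<lambda>r. r mod a) ` set_mset (prime_factorization n)"
    and sz: "size (filter_mset (\<lambda>r. r mod a \<notin> H_odd a p) (prime_factorization n)) \<ge> 2 ^ (v - 1)"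
  shows "n \<notin> Estar a"
proof -
  define T where "T = filter_mset (\<lambda>r. r mod a \<notin> H_odd a p) (prime_factorization n)"
  define P where "P = image_mset (pr \<circ> fk) T"
  have "\<forall>x\<in>#P. odd (snd x) \<and> fst x < v"
  proof
    fix x assume "x \<in># P"
    then obtain r where r: "r \<in># T" "x = pr (fk r)" unfolding P_def by auto
    show "odd (snd x) \<and> fst x < v" using T_props[OF cop r(1)[unfolded T_def]] r(2) pr_odd pr_lt by simp
  qed
  moreover have "2 ^ (v - 1) \<le> wt P"
  proof -
    have "size P = size T" unfolding P_def by simp
    thus ?thesis using wt_ge_size[of P] sz T_def by simp
  qed
  ultimately obtain s where "achf pval P s" "[s = 2 ^ (v - 1)] (mod 2 ^ v)" using comb[OF v_pos] by blast
  thus ?thesis using finish[OF n cop cover] unfolding P_def T_def by blast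
qed

lemma gpow_exp:
  assumes rq: "coprime r q" and cg: "cong_gpow q g e' r"
  shows "[fk r = e'] (mod 2 ^ v)"
proof -
  have v2: "(2::nat) ^ v dvd ph" using ph_eq by simp
  have kr: "[g ^ kap r = r] (mod q)" using kap(2)[OF rq] .
  show ?thesis
  proof (cases "e' \<ge> 0")
    case True
    hence "[r = g ^ nat e'] (mod q)" using cg by (simp add: cong_gpow_def)
    with kr have "[g ^ kap r = g ^ nat e'] (mod q)" by (rule cong_trans)
    hence "[kap r = nat e'] (mod ph)" by (simp only: exp_cong)
    hence "[kap r = nat e'] (mod 2 ^ v)" using v2 by (rule cong_dvd_modulus_nat)
    hence "[int (kap r) = int (nat e')] (mod int (2 ^ v))" by (simp only: cong_int_iff)
    thus ?thesis using True unfolding fk_def by simp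
  next
    case False
    hence "[r * g ^ nat (- e') = 1] (mod q)" using cg by (simp add: cong_gpow_def)
    moreover have "[g ^ kap r * g ^ nat (- e') = r * g ^ nat (- e')] (mod q)" using kr by (intro cong_mult) auto
    ultimately have "[g ^ (kap r + nat (- e')) = g ^ 0] (mod q)" by (simp add: power_add) (metis cong_trans)
    hence "[kap r + nat (- e') = 0] (mod ph)" by (simp only: exp_cong)
    hence "[kap r + nat (- e') = 0] (mod 2 ^ v)" using v2 by (rule cong_dvd_modulus_nat)
    hence "int (2 ^ v) dvd int (kap r + nat (- e')) - int 0" by (rule nat_cong_int_dvd)
    hence "(2::int) ^ v dvd int (kap r) - e'" using False by simp
    thus ?thesis unfolding fk_def by (simp add: cong_iff_dvd_diff)
  qed
qed

end



context oc2
begin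

lemma part_ii:
  fixes n :: nat
  assumes n: "n > 0" and cop: "gcd n a = 1"
    and cover: "H_odd a p \<subseteq> (\<lambda>r. r mod a) ` set_mset (prime_factorization n)"
    and v2: "v \<ge> 2"
    and sz: "size (filter_mset (\<lambda>r. r mod a \<notin> H_odd a p) (prime_factorization n)) = 2 ^ (v - 1) - 1"
  shows "n \<in> Estar a \<longleftrightarrow>
    (\<exists>e::int. odd e \<and>
       (\<forall>r \<in># filter_mset (\<lambda>r. r mod a \<notin> H_odd a p) (prime_factorization n).
          \<exists>e'::int. cong_gpow q g e' r \<and> ([e' = e] (mod 2 ^ v) \<or> [e' = - e] (mod 2 ^ v))))"
proof -
  define T where "T = filter_mset (\<lambda>r. r mod a \<notin> H_odd a p) (prime_factorization n)"
  have copn: "coprime n a" using cop by (rule coprime_iff_gcd_eq_1[THEN iffD2])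
  have Tq: "coprime r q" if "r \<in># T" for r
    using cop_q[OF pf_cop[OF copn]] that unfolding T_def by simp
  have Tp: "fk r \<noteq> 0" "\<not> 2 ^ v dvd fk r" if "r \<in># T" for r
    using T_props[OF cop] that unfolding T_def by auto
  have estar: "n \<in> Estar a \<longleftrightarrow> \<not> (n \<notin> Estar a)" by simp
  have szT: "size T = 2 ^ (v - 1) - 1" using sz T_def by simp
  have pow: "(2::nat) ^ (v - 1) \<ge> 2"
  proof -
    have "(2::nat) ^ 1 \<le> 2 ^ (v - 1)" using v2 by (intro power_increasing) auto
    thus ?thesis by simp
  qed
  have fin: "n \<notin> Estar a" if "achf pval (image_mset (pr \<circ> fk) T) s" "[s = 2 ^ (v - 1)] (mod 2 ^ v)" for s
    using finish[OF n cop cover] that unfolding T_def by blast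
  show ?thesis unfolding T_def[symmetric]
  proof
    assume E: "n \<in> Estar a"
    show "\<exists>e::int. odd e \<and> (\<forall>r \<in># T. \<exists>e'::int. cong_gpow q g e' r \<and> ([e' = e] (mod 2 ^ v) \<or> [e' = - e] (mod 2 ^ v)))"
    proof (rule ccontr)
      assume neg: "\<not> (\<exists>e::int. odd e \<and> (\<forall>r \<in># T. \<exists>e'::int. cong_gpow q g e' r \<and> ([e' = e] (mod 2 ^ v) \<or> [e' = - e] (mod 2 ^ v))))"
      have "T \<noteq> {#}" using szT pow by auto
      then obtain r0 where r0: "r0 \<in># T" by blast
      have "n \<notin> Estar a"
      proof (cases "\<exists>r\<in>#T. even (fk r)")
        case True
        then obtain r where r: "r \<in># T" "even (fk r)" by blast
        define T' where "T' = T - {#r#}"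
        have Tr: "T = add_mset r T'" unfolding T'_def using r by simp
        define P where "P = image_mset (pr \<circ> fk) T"
        have "\<forall>x\<in>#P. odd (snd x) \<and> fst x < v"
        proof
          fix x assume "x \<in># P"
          then obtain r where r: "r \<in># T" "x = pr (fk r)" unfolding P_def by auto
          show "odd (snd x) \<and> fst x < v" using Tp[OF r(1)] r(2) pr_odd pr_lt by simp
        qed
        moreover have "2 ^ (v - 1) \<le> wt P"
        proof -
          have "fst (pr (fk r)) \<ge> 1" using Tp[OF r(1)] r(2) by (intro pr_ge) auto
          hence "(2::nat) ^ 1 \<le> 2 ^ fst (pr (fk r))" by (intro power_increasing) auto
          hence "(2::nat) \<le> 2 ^ fst (pr (fk r))" by simp
          moreover have "wt P = 2 ^ fst (pr (fk r)) + wt (image_mset (pr \<circ> fk) T')" unfolding P_def Tr by simp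
          moreover have "wt (image_mset (pr \<circ> fk) T') \<ge> size T'" using wt_ge_size[of "image_mset (pr \<circ> fk) T'"] by simp
          moreover have "size T = Suc (size T')" using Tr by simp
          ultimately show ?thesis using szT pow by linarith
        qed
        ultimately obtain s where "achf pval P s" "[s = 2 ^ (v - 1)] (mod 2 ^ v)" using comb[OF v_pos] by blast
        thus ?thesis using fin unfolding P_def by blast
      next
        case False
        hence allodd: "odd (fk r)" if "r \<in># T" for r using that by blast
        define e where "e = fk r0"
        have oe: "odd e" unfolding e_def using allodd r0 by simp
        obtain r1 where r1: "r1 \<in># T" and nr1: "\<not> (\<exists>e'::int. cong_gpow q g e' r1 \<and> ([e' = e] (mod 2 ^ v) \<or> [e' = - e] (mod 2 ^ v)))"
          using neg oe by blast
        have "cong_gpow q g (fk r1) r1"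
          using kap(2)[OF Tq[OF r1]] unfolding cong_gpow_def fk_def by (simp add: cong_sym)
        hence ne: "\<not> [fk r1 = e] (mod 2 ^ v)" "\<not> [fk r1 = - e] (mod 2 ^ v)" using nr1 by auto
        have "r1 \<noteq> r0" using ne(1) unfolding e_def by auto
        hence "r1 \<in># T - {#r0#}" using r1 by (simp add: in_diff_count)
        define N where "N = T - {#r0#} - {#r1#}"
        have t1: "add_mset r0 (T - {#r0#}) = T" using r0 by (rule insert_DiffM)
        have t2: "add_mset r1 (T - {#r0#} - {#r1#}) = T - {#r0#}" using \<open>r1 \<in># T - {#r0#}\<close> by (rule insert_DiffM)
        have TN: "T = add_mset r0 (add_mset r1 N)"
          unfolding N_def t2 t1 ..
        define x0 where "x0 = fk r0"
        define x1 where "x1 = fk r1"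
        have ox: "odd x0" "odd x1" unfolding x0_def x1_def using allodd r0 r1 by auto
        have "4 dvd x0 + x1 \<or> 4 dvd x0 - x1" using ox by presburger
        then obtain c :: int where c: "c = 1 \<or> c = -1" "4 dvd x0 + c * x1" by (metis mult_1 mult_minus1 diff_conv_add_uminus)
        define y where "y = x0 + c * x1"
        have ny: "\<not> 2 ^ v dvd y"
        proof
          assume "2 ^ v dvd y"
          hence "[x0 + c * x1 = 0] (mod 2 ^ v)" unfolding y_def by (simp add: cong_0_iff)
          show False using c(1)
          proof
            assume "c = 1"
            hence "[x1 = - x0] (mod 2 ^ v)" using \<open>[x0 + c * x1 = 0] (mod 2 ^ v)\<close>
              by (simp add: cong_iff_dvd_diff algebra_simps)
            thus False using ne(2) unfolding x0_def x1_def e_def by simp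
          next
            assume "c = -1"
            hence "[x1 = x0] (mod 2 ^ v)" using \<open>[x0 + c * x1 = 0] (mod 2 ^ v)\<close>
              by (simp add: cong_iff_dvd_diff) (metis dvd_minus_iff minus_diff_eq)
            thus False using ne(1) unfolding x0_def x1_def e_def by simp
          qed
        qed
        hence y0: "y \<noteq> 0" by auto
        define z where "z = pr y"
        have z: "odd (snd z)" "fst z < v" "fst z \<ge> 2" "pval z = pval (pr x0) + c * pval (pr x1)"
          using pr_odd[OF y0] pr_lt[OF y0 ny] pr_ge[OF y0, of 2] c(2) unfolding z_def
          by (simp_all add: pr_val y_def)
        define P' where "P' = add_mset z (image_mset (pr \<circ> fk) N)"
        have "\<forall>x\<in>#P'. odd (snd x) \<and> fst x < v"
        proof
          fix x assume "x \<in># P'"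
          hence "x = z \<or> x \<in># image_mset (pr \<circ> fk) N" unfolding P'_def by simp
          thus "odd (snd x) \<and> fst x < v"
          proof
            assume "x \<in># image_mset (pr \<circ> fk) N"
            then obtain r where r: "r \<in># N" "x = pr (fk r)" by auto
            have "r \<in># T" using r(1) TN by simp
            thus ?thesis using Tp r(2) pr_odd pr_lt by simp
          qed (use z in simp)
        qed
        moreover have "2 ^ (v - 1) \<le> wt P'"
        proof -
          have "(2::nat) ^ 2 \<le> 2 ^ fst z" using z(3) by (intro power_increasing) auto
          hence "(4::nat) \<le> 2 ^ fst z" by simp
          moreover have "wt P' = 2 ^ fst z + wt (image_mset (pr \<circ> fk) N)" unfolding P'_def by simp
          moreover have "wt (image_mset (pr \<circ> fk) N) \<ge> size N" using wt_ge_size[of "image_mset (pr \<circ> fk) N"] by simp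
          moreover have "size T = Suc (Suc (size N))" using TN by simp
          ultimately show ?thesis using szT pow by linarith
        qed
        ultimately obtain s where s: "achf pval P' s" "[s = 2 ^ (v - 1)] (mod 2 ^ v)" using comb[OF v_pos] by blast
        have "achf pval (add_mset (pr x0) (add_mset (pr x1) (image_mset (pr \<circ> fk) N))) s"
          using merge[OF s(1)[unfolded P'_def] z(4) c(1)] .
        hence "achf pval (image_mset (pr \<circ> fk) T) s" unfolding TN x0_def x1_def by simp
        thus ?thesis using fin s(2) by blast
      qed
      thus False using E by blast
    qed
  next
    assume "\<exists>e::int. odd e \<and> (\<forall>r \<in># T. \<exists>e'::int. cong_gpow q g e' r \<and> ([e' = e] (mod 2 ^ v) \<or> [e' = - e] (mod 2 ^ v)))"
    then obtain e :: int where oe: "odd e" and he: "\<forall>r \<in># T. \<exists>e'::int. cong_gpow q g e' r \<and> ([e' = e] (mod 2 ^ v) \<or> [e' = - e] (mod 2 ^ v))" by blast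
    have pm: "\<forall>r\<in>#T. [fk r = e] (mod 2 ^ v) \<or> [fk r = - e] (mod 2 ^ v)"
    proof
      fix r assume r: "r \<in># T"
      then obtain e' where e': "cong_gpow q g e' r" "[e' = e] (mod 2 ^ v) \<or> [e' = - e] (mod 2 ^ v)" using he by blast
      have "[fk r = e'] (mod 2 ^ v)" using gpow_exp[OF Tq[OF r] e'(1)] .
      thus "[fk r = e] (mod 2 ^ v) \<or> [fk r = - e] (mod 2 ^ v)" using e'(2) by (metis cong_trans)
    qed
    have szlt: "size T < 2 ^ (v - 1)" using szT pow by simp
    show "n \<in> Estar a"
    proof (rule ccontr)
      assume "n \<notin> Estar a"
      hence "\<exists>d1 d2. d1 dvd n \<and> d2 dvd n \<and> a dvd d1 + d2" using notE_iff[OF a3 n cop] by blast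
      then obtain s where s: "achf (\<lambda>r. int (kap r)) T s" "[s = 2 ^ (v - 1)] (mod 2 ^ v)"
        using K2[OF n cop cover] unfolding T_def by blast
      have "achf fk T s" using s(1) unfolding fk_def by simp
      thus False using nonach[OF v_pos oe pm szlt] s(2) by blast
    qed
  qed
qed

end



lemma idx2:
  fixes Q :: nat
  assumes Q: "Q > 1" and SU: "S \<subseteq> units_mod Q" and S1: "1 \<in> S"
    and cl: "\<forall>x\<in>S. \<forall>y\<in>S. (x * y) mod Q \<in> S" and cS: "2 * card S = totient Q"
    and x: "x \<in> units_mod Q" "x \<notin> S" and y: "y \<in> units_mod Q" "y \<notin> S"
  shows "(x * y) mod Q \<in> S"
proof -
  have U: "units_mod Q = totatives Q" using Q by (rule units_tot)
  have finU: "finite (units_mod Q)" unfolding U by simp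
  have cardU: "card (units_mod Q) = totient Q" unfolding U totient_def ..
  have finS: "finite S" using SU finU by (rule finite_subset)
  have uQ: "z < Q" "coprime z Q" if "z \<in> units_mod Q" for z using that by (auto simp: units_mod_def)
  have pw: "s ^ Suc k mod Q \<in> S" if "s \<in> S" for s k
  proof (induction k)
    case 0
    show ?case using that uQ SU by auto
  next
    case (Suc k)
    have "(s ^ Suc k mod Q * s) mod Q \<in> S" using Suc that cl by blast
    also have "(s ^ Suc k mod Q * s) mod Q = (s ^ Suc k * s) mod Q" by (rule mod_mult_left_eq)
    also have "s ^ Suc k * s = s ^ Suc (Suc k)" by (rule power_Suc2[symmetric])
    finally show ?case .
  qed
  have "card S > 0" using S1 finS card_gt_0_iff by blast
  hence "card S \<ge> 1" by simp
  hence phi2: "totient Q \<ge> 2" using cS by simp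
  define iv where "iv s = s ^ (totient Q - 1) mod Q" for s
  have ivS: "iv s \<in> S" if "s \<in> S" for s
  proof -
    have e: "totient Q - 1 = Suc (totient Q - 2)" using phi2 by simp
    show ?thesis unfolding iv_def e by (rule pw[OF that])
  qed
  have ivc: "[s * iv s = 1] (mod Q)" if "s \<in> S" for s
  proof -
    have "coprime s Q" using that SU uQ by auto
    hence "[s ^ totient Q = 1] (mod Q)" by (rule euler_theorem)
    moreover have e: "Suc (totient Q - 1) = totient Q" using phi2 by simp
    have "s * s ^ (totient Q - 1) = s ^ Suc (totient Q - 1)" by (rule power_Suc[symmetric])
    hence "s * s ^ (totient Q - 1) = s ^ totient Q" unfolding e .
    moreover have "[s * (s ^ (totient Q - 1) mod Q) = s * s ^ (totient Q - 1)] (mod Q)"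
      by (intro cong_mult) (auto simp: cong_def)
    ultimately show ?thesis unfolding iv_def by (metis cong_trans)
  qed
  have xc: "coprime x Q" "x < Q" using x uQ by auto
  define xS where "xS = (\<lambda>s. (x * s) mod Q) ` S"
  have disj: "S \<inter> xS = {}"
  proof (rule ccontr)
    assume "S \<inter> xS \<noteq> {}"
    then obtain s where s: "s \<in> S" "(x * s) mod Q \<in> S" unfolding xS_def by auto
    define t where "t = (x * s) mod Q"
    have "[x * (s * iv s) = x * 1] (mod Q)" using ivc[OF s(1)] by (intro cong_mult) auto
    moreover have "[x * (s * iv s) = t * iv s] (mod Q)"
    proof -
      have "[t * iv s = (x * s) * iv s] (mod Q)" unfolding t_def by (intro cong_mult) (auto simp: cong_def)
      hence "[t * iv s = x * (s * iv s)] (mod Q)" by (simp only: mult.assoc)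
      thus ?thesis by (rule cong_sym)
    qed
    ultimately have "[x * 1 = t * iv s] (mod Q)" by (rule cong_trans[OF cong_sym])
    hence "[x = t * iv s] (mod Q)" by simp
    hence "x = (t * iv s) mod Q" using xc by (simp add: cong_def)
    moreover have "(t * iv s) mod Q \<in> S" using cl s ivS t_def by blast
    ultimately show False using x by simp
  qed
  have inj: "inj_on (\<lambda>s. (x * s) mod Q) S"
  proof
    fix s1 s2 assume "s1 \<in> S" "s2 \<in> S" "(x * s1) mod Q = (x * s2) mod Q"
    hence "[x * s1 = x * s2] (mod Q)" by (simp add: cong_def)
    hence "[s1 = s2] (mod Q)" using xc by (simp add: cong_mult_lcancel_nat)
    moreover have "s1 < Q" "s2 < Q" using \<open>s1 \<in> S\<close> \<open>s2 \<in> S\<close> SU uQ by auto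
    ultimately show "s1 = s2" by (simp add: cong_less_modulus_unique_nat)
  qed
  have xSU: "xS \<subseteq> units_mod Q"
  proof
    fix z assume "z \<in> xS"
    then obtain s where s: "s \<in> S" "z = (x * s) mod Q" unfolding xS_def by auto
    have "coprime s Q" using s SU uQ by auto
    hence "coprime (x * s) Q" using xc by simp
    hence "coprime z Q" using s Q by simp
    moreover have "z < Q" using s Q by simp
    ultimately show "z \<in> units_mod Q" by (simp add: units_mod_def)
  qed
  have "card (S \<union> xS) = card S + card xS" using disj finS xS_def by (simp add: card_Un_disjoint)
  also have "card xS = card S" unfolding xS_def using inj by (simp add: card_image)
  finally have "card (S \<union> xS) = card (units_mod Q)" using cS cardU by simp
  hence SxS: "S \<union> xS = units_mod Q" using SU xSU finU by (intro card_subset_eq) auto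
  have xy: "(x * y) mod Q \<in> units_mod Q"
  proof -
    have "coprime y Q" using y uQ by auto
    hence "coprime ((x * y) mod Q) Q" using xc Q by simp
    thus ?thesis using Q by (simp add: units_mod_def)
  qed
  show ?thesis
  proof (rule ccontr)
    assume "(x * y) mod Q \<notin> S"
    hence "(x * y) mod Q \<in> xS" using xy SxS by blast
    then obtain s where s: "s \<in> S" "(x * y) mod Q = (x * s) mod Q" unfolding xS_def by auto
    hence "[x * y = x * s] (mod Q)" by (simp add: cong_def)
    hence "[y = s] (mod Q)" using xc by (simp add: cong_mult_lcancel_nat)
    moreover have "y < Q" "s < Q" using y s SU uQ by auto
    ultimately have "y = s" by (simp add: cong_less_modulus_unique_nat)
    thus False using s y by simp
  qed
qed

lemma H0_part:
  fixes a n :: nat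
  assumes a3: "a \<ge> 3" and n: "n > 0" and cop: "gcd n a = 1" and g2: "gamma0 a \<ge> 2"
    and adm: "admissible_H0 a S" and HS: "H = {x \<in> units_mod a. x mod 2 ^ gamma0 a \<in> S}"
    and cover: "H \<subseteq> (\<lambda>r. r mod a) ` set_mset (prime_factorization n)"
    and r: "r \<in># prime_factorization n" "r mod a \<notin> H"
  shows "n \<notin> Estar a"
proof -
  define Q where "Q = (2::nat) ^ gamma0 a"
  have Qd: "Q dvd a" unfolding Q_def gamma0_def by (rule multiplicity_dvd)
  have "(2::nat) ^ 2 \<le> Q" unfolding Q_def using g2 by (intro power_increasing) auto
  hence Q4: "Q \<ge> 4" by simp
  have A: "S \<subseteq> units_mod Q" "1 \<in> S" "\<forall>x\<in>S. \<forall>y\<in>S. (x * y) mod Q \<in> S" "2 * card S = totient Q" "Q - 1 \<notin> S"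
    using adm unfolding admissible_H0_def Q_def Let_def by auto
  have a0: "a > 0" using a3 by simp
  have copn: "coprime n a" using cop by (rule coprime_iff_gcd_eq_1[THEN iffD2])
  have ra: "coprime r a" using pf_cop[OF copn r(1)] .
  have "coprime a r" using ra by (simp add: coprime_commute)
  hence "coprime Q r" using dvd_cop[OF Qd] by simp
  hence rQ: "coprime r Q" by (simp add: coprime_commute)
  have "r mod a \<in> units_mod a" using ra a0 by (simp add: units_mod_def)
  hence "r mod a mod Q \<notin> S" using r(2) HS Q_def by auto
  hence xS: "r mod Q \<notin> S" using Qd by (simp add: mod_mod_cancel)
  have xU: "r mod Q \<in> units_mod Q" using rQ Q4 by (simp add: units_mod_def)
  have "coprime (Q - 1) Q" using Q4 by (intro coprime_diff_one_left_nat) simp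
  hence yU: "Q - 1 \<in> units_mod Q" using Q4 by (simp add: units_mod_def)
  have S1: "(r mod Q * (Q - 1)) mod Q \<in> S" using idx2[OF _ A(1,2,3,4) xU xS yU A(5)] Q4 by simp
  define h where "h = ((a - 1) * r) mod a"
  have "coprime (a - 1) a" using a0 by (rule coprime_diff_one_left_nat)
  hence hU: "h \<in> units_mod a" unfolding h_def using ra a0 by (simp add: units_mod_def)
  have "[a - 1 = Q - 1] (mod Q)"
  proof -
    have "[a - 1 + 1 = 0] (mod Q)" using a0 Qd by (simp add: cong_0_iff)
    moreover have "[Q - 1 + 1 = 0] (mod Q)" using Q4 by (simp add: cong_0_iff)
    ultimately have "[a - 1 + 1 = Q - 1 + 1] (mod Q)" by (metis cong_sym cong_trans)
    thus ?thesis by (simp only: cong_add_rcancel_nat)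
  qed
  hence "[(a - 1) * r = (Q - 1) * (r mod Q)] (mod Q)" by (intro cong_mult) (auto simp: cong_def)
  hence "h mod Q = (r mod Q * (Q - 1)) mod Q" unfolding h_def using Qd
    by (simp add: mod_mod_cancel cong_def ac_simps)
  hence "h \<in> H" using hU S1 HS Q_def by simp
  then obtain r' where r': "r' \<in># prime_factorization n" "r' mod a = h" using cover by auto
  have "r dvd n" "r' dvd n" using r(1) r'(1) by (auto intro: in_prime_factors_imp_dvd)
  moreover have "a dvd r + r'"
  proof -
    have "[r' = (a - 1) * r] (mod a)" using r'(2) unfolding h_def by (simp add: cong_def)
    hence "[r + r' = r + (a - 1) * r] (mod a)" by (intro cong_add) auto
    moreover have "r + (a - 1) * r = a * r" using a0 by (cases a) auto
    ultimately have "[r + r' = 0] (mod a)" by (simp add: cong_def)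
    thus ?thesis by (simp add: cong_0_iff)
  qed
  ultimately show ?thesis using notE_iff[OF a3 n cop] by blast
qed

lemma m_le1:
  assumes "gamma0 a \<ge> 2"
  shows "m_of a \<le> 1"
proof -
  define G where "G = Gcd ({delta_of a} \<union> {p - 1 | p. prime p \<and> odd p \<and> p dvd a})"
  have "delta_of a = 2" using assms by (simp add: delta_of_def)
  hence "G dvd 2" unfolding G_def by (intro Gcd_dvd) simp
  hence "multiplicity 2 G \<le> multiplicity 2 (2::nat)" by (intro dvd_imp_multiplicity_le) auto
  thus ?thesis unfolding m_of_def G_def[symmetric] by simp
qed




lemma primroot_ex:
  fixes a p :: nat
  assumes "a > 0" "prime p" "odd p" "p dvd a"
  obtains g where "residue_primroot (ppart a p) g"
proof -
  obtain g where g: "\<forall>k>0. residue_primroot (p ^ k) g"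
    using residue_primroot_odd_prime_power_exists[OF assms(2,3)] by blast
  have nu: "\<not> is_unit p" using assms(2) not_prime_unit by blast
  have "p ^ 1 dvd a" using assms(4) by simp
  hence "multiplicity p a \<ge> 1" using assms(1) nu by (intro multiplicity_geI) auto
  hence "residue_primroot (ppart a p) g" using g unfolding ppart_def by simp
  thus ?thesis by (rule that)
qed

theorem lemma2p9:
  fixes a n :: nat and H :: "nat set"
  assumes a3: "a \<ge> 3"
    and HH: "H \<in> frakH a"
    and npos: "n > 0"
    and cop: "gcd n a = 1"
    and cover: "H \<subseteq> (\<lambda>r. r mod a) ` set_mset (prime_factorization n)"
  shows
    "(size (filter_mset (\<lambda>r. r mod a \<notin> H) (prime_factorization n)) \<ge> 2 ^ (m_of a - 1)
        \<longrightarrow> n \<notin> Estar a)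
     \<and>
     (size (filter_mset (\<lambda>r. r mod a \<notin> H) (prime_factorization n)) = 2 ^ (m_of a - 1) - 1
        \<and> m_of a \<ge> 2 \<longrightarrow>
        (gamma0 a \<le> 1 \<and> (\<exists>p. prime p \<and> odd p \<and> p dvd a \<and> H = H_odd a p)) \<and>
        (\<forall>p g. prime p \<and> odd p \<and> p dvd a \<and> H = H_odd a p \<and> residue_primroot (ppart a p) g \<longrightarrow>
           (n \<in> Estar a \<longleftrightarrow>
              (\<exists>e::int. odd e \<and>
                 (\<forall>r \<in># filter_mset (\<lambda>r. r mod a \<notin> H) (prime_factorization n).
                    \<exists>e'::int. cong_gpow (ppart a p) g e' r \<and>
                      ([e' = e] (mod 2 ^ m_of a) \<or> [e' = - e] (mod 2 ^ m_of a)))))))"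

proof -
  have card: "totient a = 2 ^ m_of a * card H"
    and disj: "(\<exists>p. prime p \<and> odd p \<and> p dvd a \<and> H = H_odd a p) \<or>
          (gamma0 a \<ge> 2 \<and> (\<exists>S. admissible_H0 a S \<and> H = {x \<in> units_mod a. x mod 2 ^ gamma0 a \<in> S}))"
    using HH unfolding frakH_def by blast+
  have a0: "a > 0" using a3 by simp
  have oc2I: "oc2 a p g" if "prime p" "odd p" "p dvd a" "H = H_odd a p" "residue_primroot (ppart a p) g" for p g
    using that a3 card by unfold_locales auto
  show ?thesis
  proof (intro conjI impI)
    assume t: "size (filter_mset (\<lambda>r. r mod a \<notin> H) (prime_factorization n)) \<ge> 2 ^ (m_of a - 1)"
    show "n \<notin> Estar a"
      using disj
    proof
      assume "\<exists>p. prime p \<and> odd p \<and> p dvd a \<and> H = H_odd a p"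
      then obtain p where p: "prime p" "odd p" "p dvd a" "H = H_odd a p" by blast
      obtain g where g: "residue_primroot (ppart a p) g" using primroot_ex[OF a0 p(1-3)] by blast
      interpret I: oc2 a p g using oc2I[OF p g] .
      show ?thesis using I.part_i[OF npos cop] cover t p(4) I.mm by simp
    next
      assume "gamma0 a \<ge> 2 \<and> (\<exists>S. admissible_H0 a S \<and> H = {x \<in> units_mod a. x mod 2 ^ gamma0 a \<in> S})"
      then obtain S where S: "gamma0 a \<ge> 2" "admissible_H0 a S" "H = {x \<in> units_mod a. x mod 2 ^ gamma0 a \<in> S}" by blast
      have "size (filter_mset (\<lambda>r. r mod a \<notin> H) (prime_factorization n)) \<noteq> 0" using t by (metis not_one_le_zero one_le_numeral power_eq_0_iff one_le_power le_zero_eq)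
      then obtain r where "r \<in># filter_mset (\<lambda>r. r mod a \<notin> H) (prime_factorization n)"
        by (metis multiset_nonemptyE size_empty)
      hence r: "r \<in># prime_factorization n" "r mod a \<notin> H" by auto
      show ?thesis using H0_part[OF a3 npos cop S cover r] .
    qed
  next
    assume t: "size (filter_mset (\<lambda>r. r mod a \<notin> H) (prime_factorization n)) = 2 ^ (m_of a - 1) - 1 \<and> m_of a \<ge> 2"
    have g1: "gamma0 a \<le> 1"
    proof (rule ccontr)
      assume "\<not> gamma0 a \<le> 1"
      hence "m_of a \<le> 1" by (intro m_le1) simp
      thus False using t by simp
    qed
    show "gamma0 a \<le> 1" by (rule g1)
    show "\<exists>p. prime p \<and> odd p \<and> p dvd a \<and> H = H_odd a p"
      using disj g1 by auto
    show "\<forall>p g. prime p \<and> odd p \<and> p dvd a \<and> H = H_odd a p \<and> residue_primroot (ppart a p) g \<longrightarrow>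
           (n \<in> Estar a \<longleftrightarrow>
              (\<exists>e::int. odd e \<and>
                 (\<forall>r \<in># filter_mset (\<lambda>r. r mod a \<notin> H) (prime_factorization n).
                    \<exists>e'::int. cong_gpow (ppart a p) g e' r \<and>
                      ([e' = e] (mod 2 ^ m_of a) \<or> [e' = - e] (mod 2 ^ m_of a)))))"
    proof (intro allI impI)
      fix p g
      assume pg: "prime p \<and> odd p \<and> p dvd a \<and> H = H_odd a p \<and> residue_primroot (ppart a p) g"
      interpret I: oc2 a p g using oc2I pg by blast
      have v2: "I.v \<ge> 2" using t I.mm by simp
      have sz: "size (filter_mset (\<lambda>r. r mod a \<notin> H_odd a p) (prime_factorization n)) = 2 ^ (I.v - 1) - 1"
        using t pg I.mm by simp
      have cover': "H_odd a p \<subseteq> (\<lambda>r. r mod a) ` set_mset (prime_factorization n)" using cover pg by simp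
      show "n \<in> Estar a \<longleftrightarrow>
              (\<exists>e::int. odd e \<and>
                 (\<forall>r \<in># filter_mset (\<lambda>r. r mod a \<notin> H) (prime_factorization n).
                    \<exists>e'::int. cong_gpow (ppart a p) g e' r \<and>
                      ([e' = e] (mod 2 ^ m_of a) \<or> [e' = - e] (mod 2 ^ m_of a))))"
        using I.part_ii[OF npos cop cover' v2 sz] pg unfolding I.q_def I.mm by simp
    qed
  qed
qed


end
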